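(* Let $W:\mathrm{dom}(W)\to\mathcal{H}$ be a self-adjoint operator on a separable Hilbert space $\mathcal{H}$ such that $0\notin\mathrm{spec}(W)$, and let $\mathcal{H}_W$ be the associated Krein space. Then: (i) $\mathcal{H}_W$ can be identified with $\mathrm{dom}(\sqrt{|W|})\subset\mathcal{H}$; precisely, $\mathrm{dom}(\sqrt{|W|})$ equipped with the norm $h\mapsto\|\sqrt{|W|}h\|$ is complete, and it contains $\mathrm{dom}(W)$ as a dense subspace on which this norm coincides with $\|\cdot\|_J$. (ii) Under this identification, $\sqrt{|W|}:\mathrm{dom}(\sqrt{|W|})=\mathcal{H}_W\to\mathcal{H}$ is a unitary operator from $(\mathcal{H}_W,[\cdot,\cdot]_J)$ onto $(\mathcal{H},\langle\cdot,\cdot\rangle)$. (iii) A sequence $\{k_n\}_{n\in\mathbb{N}}\subset\mathcal{H}$ is a frame for the Hilbert space $\mathcal{H}$ with frame bounds $A\le B$ if and only if $\{\sqrt{|W|}^{\,-1}k_n\}_{n\in\mathbb{N}}\subset\mathcal{H}_W$ is a frame for the Krein space $\mathcal{H}_W$ with frame bounds $A\le B$.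
   Context: For a (possibly unbounded) self-adjoint $W$ on $\mathcal{H}$ with $\ker W=\{0\}$ and polar decomposition $W=J|W|$ ($J$ self-adjoint unitary), define on $\mathrm{dom}(W)$: $[f,g]:=\langle f,Wg\rangle$, $[f,g]_J:=\langle f,|W|g\rangle$, $\|f\|_J:=\sqrt{[f,f]_J}$. $\mathcal{H}_W$ is the completion of $\mathrm{dom}(W)$ with respect to $\|\cdot\|_J$, with $[\cdot,\cdot]$, $[\cdot,\cdot]_J$, $J$ extended by continuity; it is a Krein space with fundamental symmetry $J$. A sequence $\{k_n\}\subset\mathcal{H}_W$ is a frame for the Krein space $\mathcal{H}_W$ with frame bounds $0<A\le B<\infty$ if $A\|k\|_J^2\le\sum_n|[k_n,k]|^2\le B\|k\|_J^2$ for all $k\in\mathcal{H}_W$; a frame for the Hilbert space $\mathcal{H}$ with frame bounds $A\le B$ satisfies $A\|f\|^2\le\sum_n|\langle k_n,f\rangle|^2\le B\|f\|^2$ for all $f\in\mathcal{H}$. *)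

theory Defs
  imports "HOL-Analysis.Analysis"
begin

text \<open>The distribution has no complex Hilbert spaces, so we introduce them as a type class:
 a real normed vector space with a complex scalar multiplication extending the real one and a
 complex inner product (antilinear in the first, linear in the second argument) inducing the norm.\<close>

class complex_inner = real_normed_vector +
  fixes scaleC :: "complex \<Rightarrow> 'a \<Rightarrow> 'a"
  fixes cinner :: "'a \<Rightarrow> 'a \<Rightarrow> complex"
  assumes scaleC_add_right: "scaleC a (x + y) = scaleC a x + scaleC a y"
    and scaleC_add_left: "scaleC (a + b) x = scaleC a x + scaleC b x"
    and scaleC_scaleC: "scaleC a (scaleC b x) = scaleC (a * b) x"
    and scaleC_one: "scaleC 1 x = x"
    and scaleC_of_real: "scaleC (complex_of_real r) x = scaleR r x"
    and cinner_conj: "cinner x y = cnj (cinner y x)"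
    and cinner_add_right: "cinner x (y + z) = cinner x y + cinner x z"
    and cinner_scaleC_right: "cinner x (scaleC a y) = a * cinner x y"
    and cinner_self: "cinner x x = complex_of_real ((norm x)\<^sup>2)"

class chilbert = complex_inner + complete_space

text \<open>Non-vacuity: the complex numbers form a complex Hilbert space.\<close>
instantiation complex :: complex_inner
begin
definition scaleC_complex :: "complex \<Rightarrow> complex \<Rightarrow> complex" where "scaleC_complex a x = a * x"
definition cinner_complex :: "complex \<Rightarrow> complex \<Rightarrow> complex" where "cinner_complex x y = cnj x * y"
instance
proof
  fix a b :: complex and x y z :: complex and r :: real
  show "scaleC a (x + y) = scaleC a x + scaleC a y" by (simp add: scaleC_complex_def distrib_left)
  show "scaleC (a + b) x = scaleC a x + scaleC b x" by (simp add: scaleC_complex_def distrib_right)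
  show "scaleC a (scaleC b x) = scaleC (a * b) x" by (simp add: scaleC_complex_def mult.assoc)
  show "scaleC 1 x = x" by (simp add: scaleC_complex_def)
  show "scaleC (complex_of_real r) x = r *\<^sub>R x" by (simp add: scaleC_complex_def scaleR_conv_of_real)
  show "cinner x y = cnj (cinner y x)" by (simp add: cinner_complex_def mult.commute)
  show "cinner x (y + z) = cinner x y + cinner x z" by (simp add: cinner_complex_def distrib_left)
  show "cinner x (scaleC a y) = a * cinner x y" by (simp add: cinner_complex_def scaleC_complex_def)
  show "cinner x x = complex_of_real ((norm x)\<^sup>2)"
    by (simp only: cinner_complex_def complex_norm_square mult.commute)
qed
end
instance complex :: chilbert ..

text \<open>An (unbounded) operator on the type is a partial map; its domain is \<open>dom W\<close>
 and composition \<open>\<circ>\<^sub>m\<close> is the operator product with its natural domain.\<close>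

type_synonym 'a op = "'a \<Rightarrow> 'a option"

definition lin_op :: "'a::complex_inner op \<Rightarrow> bool" where
  "lin_op W \<longleftrightarrow> 0 \<in> dom W \<and>
     (\<forall>x\<in>dom W. \<forall>y\<in>dom W. x + y \<in> dom W \<and> the (W (x + y)) = the (W x) + the (W y)) \<and>
     (\<forall>a. \<forall>x\<in>dom W. scaleC a x \<in> dom W \<and> the (W (scaleC a x)) = scaleC a (the (W x)))"

definition adjoint_op :: "'a::complex_inner op \<Rightarrow> 'a op" where
  "adjoint_op W = (\<lambda>g. if \<exists>h. \<forall>f\<in>dom W. cinner (the (W f)) g = cinner f h
                        then Some (THE h. \<forall>f\<in>dom W. cinner (the (W f)) g = cinner f h)
                        else None)"

definition self_adjoint_op :: "'a::complex_inner op \<Rightarrow> bool" where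
  "self_adjoint_op W \<longleftrightarrow> lin_op W \<and> closure (dom W) = UNIV \<and> adjoint_op W = W"

definition positive_op :: "'a::complex_inner op \<Rightarrow> bool" where
  "positive_op A \<longleftrightarrow> (\<forall>f\<in>dom A. \<exists>r\<ge>0. cinner f (the (A f)) = complex_of_real r)"

definition op_spectrum :: "'a::complex_inner op \<Rightarrow> complex set" where
  "op_spectrum W = {z. \<not> (bij_betw (\<lambda>x. the (W x) - scaleC z x) (dom W) UNIV \<and>
       (\<exists>C. \<forall>x\<in>dom W. norm x \<le> C * norm (the (W x) - scaleC z x)))}"

definition op_sqrt :: "'a::complex_inner op \<Rightarrow> 'a op" where
  "op_sqrt A = (THE S. self_adjoint_op S \<and> positive_op S \<and> S \<circ>\<^sub>m S = A)"

definition op_abs :: "'a::complex_inner op \<Rightarrow> 'a op" where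
  "op_abs W = op_sqrt (W \<circ>\<^sub>m W)"

definition krein_S :: "'a::complex_inner op \<Rightarrow> 'a op" where
  "krein_S W = op_sqrt (op_abs W)"

definition krein_Jnorm :: "'a::complex_inner op \<Rightarrow> 'a \<Rightarrow> real" where
  "krein_Jnorm W f = sqrt (Re (cinner f (the (op_abs W f))))"

text \<open>Extension by continuity of a form given on \<open>dom W\<close> to \<open>dom (sqrt |W|)\<close>, where
 \<open>dom (sqrt |W|)\<close> carries the norm \<open>h \<mapsto> \<parallel>sqrt|W| h\<parallel>\<close> (the identification of part (i)).\<close>
definition ext_form :: "'a::complex_inner op \<Rightarrow> ('a \<Rightarrow> 'a \<Rightarrow> complex) \<Rightarrow> 'a \<Rightarrow> 'a \<Rightarrow> complex" where
  "ext_form W \<phi> f g = (THE c. \<forall>fs gs. (\<forall>n. fs n \<in> dom W \<and> gs n \<in> dom W) \<and>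
      (\<lambda>n. norm (the (krein_S W (fs n - f)))) \<longlonglongrightarrow> 0 \<and>
      (\<lambda>n. norm (the (krein_S W (gs n - g)))) \<longlonglongrightarrow> 0 \<longrightarrow>
      (\<lambda>n. \<phi> (fs n) (gs n)) \<longlonglongrightarrow> c)"

text \<open>Indefinite product \<open>[f,g] = \<langle>f,Wg\<rangle>\<close> and \<open>[f,g]_J = \<langle>f,|W|g\<rangle>\<close>, extended by continuity.\<close>
definition krein_ip :: "'a::complex_inner op \<Rightarrow> 'a \<Rightarrow> 'a \<Rightarrow> complex" where
  "krein_ip W = ext_form W (\<lambda>f g. cinner f (the (W g)))"

definition krein_Jip :: "'a::complex_inner op \<Rightarrow> 'a \<Rightarrow> 'a \<Rightarrow> complex" where
  "krein_Jip W = ext_form W (\<lambda>f g. cinner f (the (op_abs W g)))"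

definition krein_Jnorm_ext :: "'a::complex_inner op \<Rightarrow> 'a \<Rightarrow> real" where
  "krein_Jnorm_ext W k = sqrt (Re (krein_Jip W k k))"

definition hilbert_frame :: "(nat \<Rightarrow> 'a::complex_inner) \<Rightarrow> real \<Rightarrow> real \<Rightarrow> bool" where
  "hilbert_frame ks A B \<longleftrightarrow> 0 < A \<and> A \<le> B \<and>
     (\<forall>f. summable (\<lambda>n. (cmod (cinner (ks n) f))\<^sup>2) \<and>
          A * (norm f)\<^sup>2 \<le> (\<Sum>n. (cmod (cinner (ks n) f))\<^sup>2) \<and>
          (\<Sum>n. (cmod (cinner (ks n) f))\<^sup>2) \<le> B * (norm f)\<^sup>2)"

definition krein_frame :: "'a::complex_inner op \<Rightarrow> (nat \<Rightarrow> 'a) \<Rightarrow> real \<Rightarrow> real \<Rightarrow> bool" where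
  "krein_frame W ks A B \<longleftrightarrow> 0 < A \<and> A \<le> B \<and> (\<forall>n. ks n \<in> dom (krein_S W)) \<and>
     (\<forall>k\<in>dom (krein_S W). summable (\<lambda>n. (cmod (krein_ip W (ks n) k))\<^sup>2) \<and>
          A * (krein_Jnorm_ext W k)\<^sup>2 \<le> (\<Sum>n. (cmod (krein_ip W (ks n) k))\<^sup>2) \<and>
          (\<Sum>n. (cmod (krein_ip W (ks n) k))\<^sup>2) \<le> B * (krein_Jnorm_ext W k)\<^sup>2)"

end

theory Submission
  imports Defs "HOL-Computational_Algebra.Formal_Power_Series"
begin


instance chilbert \<subseteq> banach ..

lemma cinner_add_left: "cinner (x + y) z = cinner x z + cinner (y::'a::complex_inner) z"
  by (simp add: cinner_conj[of "x+y" z] cinner_conj[of x z] cinner_conj[of y z] cinner_add_right)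

lemma cinner_scaleC_left: "cinner (scaleC a x) (y::'a::complex_inner) = cnj a * cinner x y"
  by (simp add: cinner_conj[of "scaleC a x" y] cinner_conj[of x y] cinner_scaleC_right)

lemma cinner_zero_right[simp]: "cinner (x::'a::complex_inner) 0 = 0"
  using cinner_add_right[of x 0 0] by simp

lemma cinner_zero_left[simp]: "cinner 0 (x::'a::complex_inner) = 0"
  using cinner_add_left[of 0 0 x] by simp

lemma cinner_minus_right: "cinner x (- y) = - cinner x (y::'a::complex_inner)"
  using cinner_add_right[of x y "-y"] by (simp add: minus_unique)

lemma cinner_minus_left: "cinner (- x) y = - cinner x (y::'a::complex_inner)"
  using cinner_add_left[of x "-x" y] by (simp add: minus_unique)

lemma cinner_diff_right: "cinner x (y - z) = cinner x y - cinner x (z::'a::complex_inner)"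
  using cinner_add_right[of x y "-z"] by (simp add: cinner_minus_right)

lemma cinner_diff_left: "cinner (x - y) z = cinner x z - cinner y (z::'a::complex_inner)"
  using cinner_add_left[of x "-y" z] by (simp add: cinner_minus_left)

lemma cinner_scaleR_right: "cinner x (r *\<^sub>R y) = of_real r * cinner x (y::'a::complex_inner)"
  by (simp add: cinner_scaleC_right flip: scaleC_of_real)

lemma cinner_scaleR_left: "cinner (r *\<^sub>R x) y = of_real r * cinner x (y::'a::complex_inner)"
  by (simp add: cinner_scaleC_left flip: scaleC_of_real)

lemma cinner_self_Re: "Re (cinner x x) = (norm (x::'a::complex_inner))\<^sup>2"
  by (simp add: cinner_self)

lemma cinner_self_Im: "Im (cinner (x::'a::complex_inner) x) = 0"
  by (simp add: cinner_self)

lemma scaleC_zero_left[simp]: "scaleC 0 (x::'a::complex_inner) = 0"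
  using scaleC_of_real[of 0 x] by simp

lemma scaleC_zero_right[simp]: "scaleC a (0::'a::complex_inner) = 0"
  using scaleC_add_right[of a 0 0] by simp

lemma scaleC_minus_right: "scaleC a (- x) = - scaleC a (x::'a::complex_inner)"
  using scaleC_add_right[of a x "-x"] by (simp add: minus_unique)

lemma scaleC_diff_right: "scaleC a (x - y) = scaleC a x - scaleC a (y::'a::complex_inner)"
  using scaleC_add_right[of a x "-y"] by (simp add: scaleC_minus_right)

lemma scaleC_scaleR_commute: "scaleC a (r *\<^sub>R x) = r *\<^sub>R scaleC a (x::'a::complex_inner)"
  by (simp add: scaleC_scaleC mult.commute flip: scaleC_of_real)

lemma norm_scaleC: "norm (scaleC a (x::'a::complex_inner)) = cmod a * norm x"
proof -
  have "(norm (scaleC a x))\<^sup>2 = Re (cinner (scaleC a x) (scaleC a x))" by (simp add: cinner_self_Re)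
  also have "\<dots> = Re (cnj a * a * cinner x x)"
    by (simp only: cinner_scaleC_left cinner_scaleC_right mult.assoc mult.left_commute)
  also have "cnj a * a * cinner x x = of_real ((cmod a * norm x)\<^sup>2)"
  proof -
    have "of_real ((cmod a * norm x)\<^sup>2) = of_real ((cmod a)\<^sup>2) * (of_real ((norm x)\<^sup>2) :: complex)"
      by (simp add: power_mult_distrib)
    also have "\<dots> = cnj a * a * cinner x x" by (simp only: complex_norm_square cinner_self mult.commute)
    finally show ?thesis by simp
  qed
  finally show ?thesis by (simp add: power2_eq_iff_nonneg)
qed

lemma cinner_eq_zero_iff: "cinner x x = 0 \<longleftrightarrow> (x::'a::complex_inner) = 0"
  by (simp add: cinner_self)

lemma quad_cs:
  fixes a b c :: real
  assumes q: "\<And>t. 0 \<le> a + 2*t*b + t\<^sup>2*c" and a: "0 \<le> a" and c: "0 \<le> c"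
  shows "b\<^sup>2 \<le> a * c"
proof (cases "c = 0")
  case True
  have "b = 0"
  proof (rule ccontr)
    assume "b \<noteq> 0"
    have "0 \<le> a + 2*(-(a+1)/(2*b))*b + (-(a+1)/(2*b))\<^sup>2*c" by (rule q)
    with True \<open>b \<noteq> 0\<close> show False by (simp add: field_simps)
  qed
  then show ?thesis using True by simp
next
  case False
  with c have cp: "c > 0" by simp
  have "0 \<le> a + 2*(-b/c)*b + (-b/c)\<^sup>2*c" by (rule q)
  also have "\<dots> = a - b\<^sup>2/c" using cp by (simp add: field_simps power2_eq_square)
  finally show ?thesis using cp by (simp add: field_simps)
qed

section \<open>Bounded operators\<close>

definition clin :: "('a::complex_inner \<Rightarrow> 'a) \<Rightarrow> bool" where
  "clin L \<longleftrightarrow> (\<forall>x y. L (x + y) = L x + L y) \<and> (\<forall>a x. L (scaleC a x) = scaleC a (L x))"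

definition bnd :: "('a::complex_inner \<Rightarrow> 'a) \<Rightarrow> bool" where
  "bnd L \<longleftrightarrow> (\<exists>C. \<forall>x. norm (L x) \<le> C * norm x)"

definition hsym :: "('a::complex_inner \<Rightarrow> 'a) \<Rightarrow> bool" where
  "hsym L \<longleftrightarrow> (\<forall>x y. cinner (L x) y = cinner x (L y))"

definition hpos :: "('a::complex_inner \<Rightarrow> 'a) \<Rightarrow> bool" where
  "hpos L \<longleftrightarrow> (\<forall>x. 0 \<le> Re (cinner x (L x)))"

definition bpos :: "('a::complex_inner \<Rightarrow> 'a) \<Rightarrow> bool" where
  "bpos L \<longleftrightarrow> clin L \<and> bnd L \<and> hsym L \<and> hpos L"

lemma clin_add: "clin L \<Longrightarrow> L (x + y) = L x + L y" by (simp add: clin_def)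
lemma clin_scaleC: "clin L \<Longrightarrow> L (scaleC a x) = scaleC a (L x)" by (simp add: clin_def)
lemma clin_zero: "clin L \<Longrightarrow> L 0 = 0"
  using clin_add[of L 0 0] by simp
lemma clin_minus: "clin L \<Longrightarrow> L (- x) = - L x"
  using clin_add[of L x "-x"] clin_zero[of L] by (simp add: minus_unique)
lemma clin_diff: "clin L \<Longrightarrow> L (x - y) = L x - L y"
  using clin_add[of L x "-y"] by (simp add: clin_minus)
lemma clin_scaleR: "clin L \<Longrightarrow> L (r *\<^sub>R x) = r *\<^sub>R L x"
  by (metis clin_scaleC scaleC_of_real)
lemma clin_sum: "clin L \<Longrightarrow> L (sum f A) = (\<Sum>i\<in>A. L (f i))"
  by (induction A rule: infinite_finite_induct) (simp_all add: clin_zero clin_add)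

lemma clin_id: "clin (\<lambda>x. x)" by (simp add: clin_def)
lemma clin_comp: "clin A \<Longrightarrow> clin B \<Longrightarrow> clin (A \<circ> B)" by (simp add: clin_def)
lemma bnd_pos: "bnd L \<Longrightarrow> \<exists>C>0. \<forall>x. norm (L x) \<le> C * norm x"
proof -
  assume "bnd L"
  then obtain C where C: "\<And>x. norm (L x) \<le> C * norm x" by (auto simp: bnd_def)
  have "norm (L x) \<le> (max C 0 + 1) * norm x" for x
    by (rule order_trans[OF C[of x]]) (intro mult_right_mono, auto)
  then show ?thesis by (intro exI[of _ "max C 0 + 1"]) auto
qed

lemma bnd_comp: assumes "bnd A" "bnd B" shows "bnd (A \<circ> B)"
proof -
  obtain C where C0: "C > 0" and C: "\<And>x. norm (A x) \<le> C * norm x" using bnd_pos[OF assms(1)] by auto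
  obtain D where D: "\<And>x. norm (B x) \<le> D * norm x" using assms(2) by (auto simp: bnd_def)
  have "norm (A (B x)) \<le> (C * D) * norm x" for x
    using order_trans[OF C[of "B x"] mult_left_mono[OF D[of x]]] C0 by (simp add: mult.assoc)
  then show ?thesis by (auto simp: bnd_def)
qed

lemma clin_bnd_bounded_linear: "clin L \<Longrightarrow> bnd L \<Longrightarrow> bounded_linear L"
proof -
  assume a: "clin L" "bnd L"
  then obtain C where C: "\<And>x. norm (L x) \<le> C * norm x" by (auto simp: bnd_def)
  show ?thesis
    by (rule bounded_linear_intro[of _ C]) (use a C in \<open>auto simp: clin_add clin_scaleR mult.commute\<close>)
qed

lemma clin_bnd_continuous: "clin L \<Longrightarrow> bnd L \<Longrightarrow> continuous_on S L"
  by (intro linear_continuous_on clin_bnd_bounded_linear)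

lemma clin_bnd_tendsto: "clin L \<Longrightarrow> bnd L \<Longrightarrow> (f \<longlongrightarrow> l) F \<Longrightarrow> ((\<lambda>n. L (f n)) \<longlongrightarrow> L l) F"
  by (rule bounded_linear.tendsto[OF clin_bnd_bounded_linear])

lemma hsym_Im: "hsym L \<Longrightarrow> Im (cinner x (L x)) = 0"
proof -
  assume "hsym L"
  then have "cinner x (L x) = cinner (L x) x" by (simp add: hsym_def)
  also have "\<dots> = cnj (cinner x (L x))" by (rule cinner_conj)
  finally have "Im (cinner x (L x)) = Im (cnj (cinner x (L x)))" by simp
  then show ?thesis by simp
qed

lemma hsym_real: "hsym L \<Longrightarrow> cinner x (L x) = of_real (Re (cinner x (L x)))"
  using hsym_Im[of L x] by (simp add: complex_eq_iff)

lemma gen_cs: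
  assumes l: "clin B" and s: "hsym B" and p: "hpos B"
  shows "(Re (cinner x (B y)))\<^sup>2 \<le> Re (cinner x (B x)) * Re (cinner y (B y))"
proof (rule quad_cs)
  fix t :: real
  have "cinner y (B x) = cinner (B y) x" using s by (simp add: hsym_def)
  also have "\<dots> = cnj (cinner x (B y))" by (rule cinner_conj)
  finally have "Re (cinner y (B x)) = Re (cinner x (B y))" by simp
  moreover have "cinner (x + t *\<^sub>R y) (B (x + t *\<^sub>R y)) =
      cinner x (B x) + of_real t * cinner x (B y) + of_real t * cinner y (B x) + of_real (t\<^sup>2) * cinner y (B y)"
    using l by (simp add: clin_add clin_scaleR cinner_add_left cinner_add_right cinner_scaleR_left
        cinner_scaleR_right power2_eq_square algebra_simps)
  ultimately have "Re (cinner (x + t *\<^sub>R y) (B (x + t *\<^sub>R y))) =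
      Re (cinner x (B x)) + 2 * t * Re (cinner x (B y)) + t\<^sup>2 * Re (cinner y (B y))"
    by simp
  then show "0 \<le> Re (cinner x (B x)) + 2 * t * Re (cinner x (B y)) + t\<^sup>2 * Re (cinner y (B y))"
    using p by (metis hpos_def)
qed (use p in \<open>auto simp: hpos_def\<close>)

lemma re_cs: "(Re (cinner x y))\<^sup>2 \<le> (norm (x::'a::complex_inner))\<^sup>2 * (norm y)\<^sup>2"
  using gen_cs[of "\<lambda>x. x" x y] by (simp add: clin_id hsym_def hpos_def cinner_self_Re)

lemma cs: "cmod (cinner x y) \<le> norm (x::'a::complex_inner) * norm y"
proof (cases "cinner x y = 0")
  case True then show ?thesis by simp
next
  case False
  define c where "c = cinner x y"
  define w where "w = c / of_real (cmod c)"
  have cw: "cmod w = 1" using False by (simp add: w_def c_def norm_divide)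
  have "cinner (scaleC w x) y = cnj w * c" by (simp add: cinner_scaleC_left c_def)
  also have "cnj w * c = of_real (cmod c)"
    using False by (simp add: w_def c_def complex_norm_square[symmetric] power2_eq_square field_simps
        flip: complex_norm_square)
  finally have e: "Re (cinner (scaleC w x) y) = cmod c" by simp
  have "(cmod c)\<^sup>2 \<le> (norm x)\<^sup>2 * (norm y)\<^sup>2"
    using re_cs[of "scaleC w x" y] by (simp add: e norm_scaleC cw)
  then have "(cmod c)\<^sup>2 \<le> (norm x * norm y)\<^sup>2" by (simp add: power_mult_distrib)
  then show ?thesis unfolding c_def by (meson norm_ge_zero power2_le_imp_le zero_le_mult_iff)
qed

lemma pos_zero:
  assumes "clin B" "hsym B" "hpos B" "Re (cinner y (B y)) = 0"
  shows "B y = 0"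
proof -
  have "(Re (cinner (B y) (B y)))\<^sup>2 \<le> Re (cinner (B y) (B (B y))) * Re (cinner y (B y))"
    using gen_cs[OF assms(1-3), of "B y" y] .
  then have "((norm (B y))\<^sup>2)\<^sup>2 \<le> 0" using assms(4) by (simp add: cinner_self_Re)
  then show ?thesis by simp
qed

lemma tendsto_cinner:
  fixes f g :: "'b \<Rightarrow> 'a::complex_inner"
  assumes "(f \<longlongrightarrow> a) F" "(g \<longlongrightarrow> b) F"
  shows "((\<lambda>n. cinner (f n) (g n)) \<longlongrightarrow> cinner a b) F"
proof -
  have "(\<lambda>n. cinner (f n) (g n) - cinner a b) = (\<lambda>n. cinner (f n - a) (g n) + cinner a (g n - b))"
    by (auto simp: cinner_diff_left cinner_diff_right)
  moreover have "((\<lambda>n. cinner (f n - a) (g n) + cinner a (g n - b)) \<longlongrightarrow> 0) F"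
  proof -
    have bg: "((\<lambda>n. norm (g n)) \<longlongrightarrow> norm b) F" by (intro tendsto_intros assms)
    have fa: "((\<lambda>n. norm (f n - a)) \<longlongrightarrow> 0) F" by (intro tendsto_norm_zero LIM_zero assms)
    have fg: "((\<lambda>n. norm (f n - a) * norm (g n)) \<longlongrightarrow> 0) F"
      using tendsto_mult[OF fa bg] by simp
    have 1: "((\<lambda>n. cinner (f n - a) (g n)) \<longlongrightarrow> 0) F"
      by (rule tendsto_0_le[OF fg, where K=1]) (intro always_eventually allI, simp add: cs abs_mult)
    have gb: "((\<lambda>n. norm (g n - b)) \<longlongrightarrow> 0) F" by (intro tendsto_norm_zero LIM_zero assms)
    have ag: "((\<lambda>n. norm a * norm (g n - b)) \<longlongrightarrow> 0) F"
      using tendsto_mult[OF tendsto_const gb, of "norm a"] by simp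
    have 2: "((\<lambda>n. cinner a (g n - b)) \<longlongrightarrow> 0) F"
      by (rule tendsto_0_le[OF ag, where K=1]) (intro always_eventually allI, simp add: cs abs_mult)
    show ?thesis using tendsto_add[OF 1 2] by simp
  qed
  ultimately have "((\<lambda>n. cinner (f n) (g n) - cinner a b) \<longlongrightarrow> 0) F" by (simp only:)
  then show ?thesis by (simp only: LIM_zero_iff)
qed



section \<open>Coefficients of the square-root series\<close>

definition gco :: "nat \<Rightarrow> real" where "gco k = ((1/2) gchoose k) * (-1)^k"

lemma gco_0[simp]: "gco 0 = 1" by (simp add: gco_def)

lemma gco_Suc: "gco (Suc k) = gco k * ((real k - 1/2) / (real k + 1))"
proof -
  have "(1/2::real) * ((1/2) gchoose k) = of_nat k * ((1/2) gchoose k) + of_nat (Suc k) * ((1/2) gchoose (Suc k))"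
    by (rule gbinomial_mult_1)
  then have "(real k + 1) * ((1/2::real) gchoose (Suc k)) = (1/2 - real k) * ((1/2) gchoose k)"
    by (simp add: algebra_simps)
  then have e: "((1/2::real) gchoose (Suc k)) = ((1/2 - real k) / (real k + 1)) * ((1/2) gchoose k)"
    by (simp add: field_simps)
  have "gco (Suc k) = - ((-1)^k * ((1/2::real) gchoose (Suc k)))" by (simp add: gco_def)
  also have "\<dots> = gco k * ((real k - 1/2) / (real k + 1))"
    unfolding e gco_def by (simp add: field_simps)
  finally show ?thesis .
qed

lemma gco_1: "gco (Suc 0) = - 1/2" using gco_Suc[of 0] by simp

lemma gco_nonpos: "k \<ge> 1 \<Longrightarrow> gco k \<le> 0"
proof (induction k)
  case 0 then show ?case by simp
next
  case (Suc k)
  show ?case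
  proof (cases "k = 0")
    case True then show ?thesis by (simp add: gco_1)
  next
    case False
    then have "gco k \<le> 0" using Suc by simp
    moreover have "(real k - 1/2) / (real k + 1) \<ge> 0" using False by simp
    ultimately show ?thesis unfolding gco_Suc by (rule mult_nonpos_nonneg)
  qed
qed

lemma gco_cauchy: "(\<Sum>i\<le>n. gco i * gco (n - i)) = (if n = 0 then 1 else if n = 1 then -1 else 0)"
proof -
  have "(\<Sum>i\<le>n. gco i * gco (n - i)) = (\<Sum>i=0..n. ((1/2) gchoose i) * ((1/2) gchoose (n - i))) * (-1)^n"
    unfolding sum_distrib_right atMost_atLeast0
    by (rule sum.cong) (auto simp: gco_def power_add[symmetric])
  also have "\<dots> = ((1::real) gchoose n) * (-1)^n"
    using gbinomial_Vandermonde[of "1/2::real" "1/2" n] by simp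
  also have "((1::real) gchoose n) = of_nat (1 choose n)"
  proof -
    have "(of_nat (1 choose n)::real) = (of_nat 1 gchoose n)" by (rule binomial_gbinomial)
    then show ?thesis by simp
  qed
  also have "(of_nat (1 choose n) :: real) * (-1)^n = (if n = 0 then 1 else if n = 1 then -1 else 0)"
    by (cases "n = 0"; cases "n = 1") (auto simp: binomial_eq_0)
  finally show ?thesis .
qed


lemma gco_sums: "0 \<le> t \<Longrightarrow> t < 1 \<Longrightarrow> (\<lambda>n. gco n * t^n) sums sqrt (1 - t)"
proof -
  assume t: "0 \<le> t" "t < 1"
  have "\<bar>-t\<bar> < 1" using t by simp
  then have "(\<lambda>n. ((1/2) gchoose n) * (-t)^n) sums sqrt (1 + - t)"
    by (rule sqrt_series)
  moreover have "((1/2) gchoose n) * (-t)^n = gco n * t^n" for n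
  proof -
    have "(-t)^n = (-1)^n * t^n" by (rule power_minus)
    then show ?thesis by (simp add: gco_def mult_ac)
  qed
  ultimately show ?thesis by simp
qed

lemma gco_partial_bound: "(\<Sum>n<N. \<bar>gco n\<bar>) \<le> 2"
proof -
  have bt: "(\<Sum>n<N. \<bar>gco n\<bar> * t^n) \<le> 2" if t: "0 \<le> t" "t < 1" for t
  proof (cases N)
    case 0 then show ?thesis by simp
  next
    case (Suc M)
    have s: "(\<lambda>n. gco n * t^n) sums sqrt (1 - t)" using gco_sums[OF t] .
    have "(\<Sum>n<N. - (gco n * t^n)) \<le> (\<Sum>n. - (gco n * t^n))"
    proof (rule sum_le_suminf)
      show "summable (\<lambda>n. - (gco n * t ^ n))" using s by (intro summable_minus) (auto simp: sums_iff)
      show "0 \<le> - (gco n * t ^ n)" if "n \<in> - {..<N}" for n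
        using that Suc gco_nonpos[of n] t by (auto intro!: mult_nonpos_nonneg)
    qed simp
    also have "\<dots> = - sqrt (1 - t)" using s by (simp add: sums_iff suminf_minus)
    finally have "sqrt (1 - t) \<le> (\<Sum>n<N. gco n * t^n)" by (simp add: sum_negf)
    moreover have "0 \<le> sqrt (1 - t)" using t by simp
    ultimately have "(\<Sum>n<N. gco n * t^n) \<ge> 0" by linarith
    moreover have "(\<Sum>n<N. \<bar>gco n\<bar> * t^n) = 2 - (\<Sum>n<N. gco n * t^n)"
    proof -
      have "(\<Sum>n<N. \<bar>gco n\<bar> * t^n) = (\<Sum>n<N. (if n = 0 then 2 else 0) - gco n * t^n)"
        by (rule sum.cong) (auto simp: gco_nonpos abs_of_nonpos)
      also have "\<dots> = 2 - (\<Sum>n<N. gco n * t^n)" using Suc by (simp add: sum_subtractf)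
      finally show ?thesis .
    qed
    ultimately show ?thesis by simp
  qed
  define ts where "ts m = 1 - 1 / (real m + 2)" for m
  have "(\<lambda>m. ts m) \<longlonglongrightarrow> 1 - 0"
    unfolding ts_def by (intro tendsto_intros) real_asymp
  then have "(\<lambda>m. \<Sum>n<N. \<bar>gco n\<bar> * ts m ^ n) \<longlonglongrightarrow> (\<Sum>n<N. \<bar>gco n\<bar> * 1 ^ n)"
    by (intro tendsto_intros) simp
  moreover have "(\<Sum>n<N. \<bar>gco n\<bar> * ts m ^ n) \<le> 2" for m
    by (rule bt) (auto simp: ts_def field_simps)
  ultimately show ?thesis by (intro LIMSEQ_le_const2[where X="\<lambda>m. \<Sum>n<N. \<bar>gco n\<bar> * ts m ^ n"]) auto
qed

lemma gco_abs_summable: "summable (\<lambda>n. \<bar>gco n\<bar>)"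
  by (rule summableI_nonneg_bounded[OF _ gco_partial_bound]) simp

lemma gco_abs_suminf: "(\<Sum>n. \<bar>gco n\<bar>) \<le> 2"
  by (rule suminf_le_const[OF gco_abs_summable gco_partial_bound])


lemma gco_pos_sum:
  fixes r :: "nat \<Rightarrow> real"
  assumes r: "\<And>k. \<bar>r k\<bar> \<le> r 0"
  shows "summable (\<lambda>k. gco k * r k) \<and> 0 \<le> (\<Sum>k. gco k * r k)"
proof -
  have sa: "summable (\<lambda>k. \<bar>gco k\<bar> * r 0)" by (intro summable_mult2 gco_abs_summable)
  have s: "summable (\<lambda>k. gco k * r k)"
    by (rule summable_comparison_test'[OF sa]) (auto simp: abs_mult intro!: mult_left_mono r)
  have e1: "(\<Sum>k. gco k * r k) = (\<Sum>k. gco (Suc k) * r (Suc k)) + gco 0 * r 0"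
    using suminf_split_head[OF s] by linarith
  have "(\<Sum>k. gco (Suc k) * r (Suc k)) \<ge> (\<Sum>k. - \<bar>gco (Suc k)\<bar> * r 0)"
  proof (rule suminf_le)
    show "- \<bar>gco (Suc k)\<bar> * r 0 \<le> gco (Suc k) * r (Suc k)" for k
    proof -
      have "\<bar>gco (Suc k) * r (Suc k)\<bar> \<le> \<bar>gco (Suc k)\<bar> * r 0"
        unfolding abs_mult by (rule mult_left_mono[OF r]) simp
      moreover have "- (gco (Suc k) * r (Suc k)) \<le> \<bar>gco (Suc k) * r (Suc k)\<bar>" by (rule abs_ge_minus_self)
      ultimately show ?thesis by linarith
    qed
    show "summable (\<lambda>k. - \<bar>gco (Suc k)\<bar> * r 0)"
      using sa by (subst summable_Suc_iff) (simp add: summable_minus)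
    show "summable (\<lambda>k. gco (Suc k) * r (Suc k))" using s by (subst summable_Suc_iff)
  qed
  moreover have "(\<Sum>k. - \<bar>gco (Suc k)\<bar> * r 0) = - (((\<Sum>k. \<bar>gco k\<bar>) - 1) * r 0)"
  proof -
    have "(\<Sum>k. \<bar>gco (Suc k)\<bar>) = (\<Sum>k. \<bar>gco k\<bar>) - 1"
      using suminf_split_head[OF gco_abs_summable] by simp
    moreover have "summable (\<lambda>k. \<bar>gco (Suc k)\<bar>)" using gco_abs_summable by (subst summable_Suc_iff)
    ultimately show ?thesis
      using suminf_minus[OF summable_mult2[of "\<lambda>k. \<bar>gco (Suc k)\<bar>" "r 0"]]
        suminf_mult2[of "\<lambda>k. \<bar>gco (Suc k)\<bar>" "r 0"] by simp
  qed
  moreover have "((\<Sum>k. \<bar>gco k\<bar>) - 1) * r 0 \<le> r 0"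
  proof -
    have "0 \<le> r 0" using r[of 0] by linarith
    then show ?thesis using mult_right_mono[of "(\<Sum>k. \<bar>gco k\<bar>) - 1" 1 "r 0"] gco_abs_suminf by simp
  qed
  ultimately have "(\<Sum>k. gco k * r k) \<ge> 0" unfolding e1 by simp
  with s show ?thesis by simp
qed



lemma bl_scaleC: "bounded_linear (\<lambda>v::'a::complex_inner. scaleC a v)"
  by (rule bounded_linear_intro[of _ "cmod a"]) (simp_all add: scaleC_add_right scaleC_scaleR_commute norm_scaleC mult.commute)

lemma cs': "cmod (cinner x y) \<le> norm y * norm (x::'a::complex_inner)"
  using cs[of x y] by (simp add: mult.commute)

lemma bl_cinner_right: "bounded_linear (\<lambda>v::'a::complex_inner. cinner x v)"
  by (rule bounded_linear_intro[of _ "norm x"])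
    (simp_all add: cinner_add_right cinner_scaleR_right scaleR_conv_of_real cs')

lemma bl_cinner_left: "bounded_linear (\<lambda>v::'a::complex_inner. cinner v y)"
  by (rule bounded_linear_intro[of _ "norm y"])
    (simp_all add: cinner_add_left cinner_scaleR_left scaleR_conv_of_real cs)

lemma clin_pow: "clin B \<Longrightarrow> clin (B ^^ k)"
  by (induction k) (simp_all add: clin_id[unfolded id_def[symmetric]] clin_comp)

lemma pow_swap: "B ((B ^^ k) x) = (B ^^ k) (B x)"
  by (rule funpow_swap1)

lemma hsym_pow: assumes "hsym B" shows "hsym (B ^^ k)"
proof (induction k)
  case 0 then show ?case by (simp add: hsym_def)
next
  case (Suc k)
  have "cinner (B ((B ^^ k) x)) y = cinner x (B ((B ^^ k) y))" for x y
  proof -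
    have "cinner (B ((B ^^ k) x)) y = cinner ((B ^^ k) x) (B y)" using assms by (simp add: hsym_def)
    also have "\<dots> = cinner x ((B ^^ k) (B y))" using Suc by (simp add: hsym_def)
    also have "\<dots> = cinner x (B ((B ^^ k) y))" by (simp add: pow_swap)
    finally show ?thesis .
  qed
  then show ?case by (simp add: hsym_def)
qed

lemma contr_pow:
  fixes B :: "'a::real_normed_vector \<Rightarrow> 'a"
  assumes "\<And>x. norm (B x) \<le> norm x" shows "norm ((B ^^ k) x) \<le> norm x"
proof (induction k)
  case 0 show ?case by simp
next
  case (Suc k) then show ?case using assms[of "(B ^^ k) x"] by simp
qed

section \<open>The square root series\<close>

definition sqser :: "('a::complex_inner \<Rightarrow> 'a) \<Rightarrow> 'a \<Rightarrow> 'a" where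
  "sqser B x = (\<Sum>k. gco k *\<^sub>R (B ^^ k) x)"

locale contr_op =
  fixes B :: "'a::chilbert \<Rightarrow> 'a"
  assumes lin: "clin B" and sym: "hsym B" and contr: "\<And>x. norm (B x) \<le> norm x"
begin

lemma term_bound: "norm (gco k *\<^sub>R (B ^^ k) x) \<le> \<bar>gco k\<bar> * norm x"
  using contr_pow[OF contr, of k x] by (simp add: mult_left_mono)

lemma summable_norm_terms: "summable (\<lambda>k. norm (gco k *\<^sub>R (B ^^ k) x))"
  by (rule summable_comparison_test'[OF summable_mult2[OF gco_abs_summable, of "norm x"]])
    (unfold real_norm_def abs_norm_cancel, rule term_bound)

lemma summable_terms: "summable (\<lambda>k. gco k *\<^sub>R (B ^^ k) x)"
  by (rule summable_norm_cancel[OF summable_norm_terms])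

lemma sqser_bound: "norm (sqser B x) \<le> 2 * norm x"
proof -
  have "norm (sqser B x) \<le> (\<Sum>k. norm (gco k *\<^sub>R (B ^^ k) x))"
    unfolding sqser_def by (rule summable_norm[OF summable_norm_terms])
  also have "\<dots> \<le> (\<Sum>k. \<bar>gco k\<bar> * norm x)"
    by (rule suminf_le[OF term_bound summable_norm_terms summable_mult2[OF gco_abs_summable]])
  also have "\<dots> = (\<Sum>k. \<bar>gco k\<bar>) * norm x"
    by (rule suminf_mult2[OF gco_abs_summable, symmetric])
  also have "\<dots> \<le> 2 * norm x" by (rule mult_right_mono[OF gco_abs_suminf]) simp
  finally show ?thesis .
qed

lemma sqser_clin: "clin (sqser B)"
proof -
  have pl: "clin (B ^^ k)" for k by (rule clin_pow[OF lin])
  have "sqser B (x + y) = sqser B x + sqser B y" for x y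
  proof -
    have "sqser B (x + y) = (\<Sum>k. gco k *\<^sub>R (B ^^ k) x + gco k *\<^sub>R (B ^^ k) y)"
      unfolding sqser_def by (simp add: clin_add[OF pl] scaleR_add_right)
    also have "\<dots> = sqser B x + sqser B y"
      unfolding sqser_def by (rule suminf_add[OF summable_terms summable_terms, symmetric])
    finally show ?thesis .
  qed
  moreover have "sqser B (scaleC a x) = scaleC a (sqser B x)" for a x
  proof -
    have "sqser B (scaleC a x) = (\<Sum>k. scaleC a (gco k *\<^sub>R (B ^^ k) x))"
      unfolding sqser_def by (simp add: clin_scaleC[OF pl] scaleC_scaleR_commute)
    also have "\<dots> = scaleC a (sqser B x)"
      unfolding sqser_def by (rule bounded_linear.suminf[OF bl_scaleC summable_terms, symmetric])
    finally show ?thesis .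
  qed
  ultimately show ?thesis by (simp add: clin_def)
qed

lemma sqser_bnd: "bnd (sqser B)"
  using sqser_bound by (auto simp: bnd_def)

lemma sqser_hsym: "hsym (sqser B)"
proof -
  have "cinner (sqser B x) y = cinner x (sqser B y)" for x y
  proof -
    have "cinner (sqser B x) y = (\<Sum>k. cinner (gco k *\<^sub>R (B ^^ k) x) y)"
      unfolding sqser_def using bounded_linear.suminf[OF bl_cinner_left[of y] summable_terms] by simp
    also have "\<dots> = (\<Sum>k. cinner x (gco k *\<^sub>R (B ^^ k) y))"
      using hsym_pow[OF sym] by (simp add: cinner_scaleR_left cinner_scaleR_right hsym_def)
    also have "\<dots> = cinner x (sqser B y)"
      unfolding sqser_def using bounded_linear.suminf[OF bl_cinner_right[of x] summable_terms] by simp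
    finally show ?thesis .
  qed
  then show ?thesis by (simp add: hsym_def)
qed

lemma sqser_hpos: "hpos (sqser B)"
proof -
  have "0 \<le> Re (cinner x (sqser B x))" for x
  proof -
    define r where "r k = Re (cinner x ((B ^^ k) x))" for k
    have bl: "bounded_linear (\<lambda>v. Re (cinner x v))"
      by (rule bounded_linear_compose[OF bounded_linear_Re bl_cinner_right])
    have "Re (cinner x (sqser B x)) = (\<Sum>k. Re (cinner x (gco k *\<^sub>R (B ^^ k) x)))"
      unfolding sqser_def using bounded_linear.suminf[OF bl summable_terms] by simp
    also have "\<dots> = (\<Sum>k. gco k * r k)" by (simp add: r_def cinner_scaleR_right)
    finally have e: "Re (cinner x (sqser B x)) = (\<Sum>k. gco k * r k)" .
    have "\<bar>r k\<bar> \<le> r 0" for k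
    proof -
      have "\<bar>r k\<bar> \<le> cmod (cinner x ((B ^^ k) x))" unfolding r_def by (rule abs_Re_le_cmod)
      also have "\<dots> \<le> norm x * norm ((B ^^ k) x)" by (rule cs)
      also have "\<dots> \<le> norm x * norm x" by (rule mult_left_mono[OF contr_pow[OF contr]]) simp
      also have "\<dots> = r 0" by (simp add: r_def cinner_self_Re power2_eq_square)
      finally show ?thesis .
    qed
    then show ?thesis using gco_pos_sum[of r] e by simp
  qed
  then show ?thesis by (simp add: hpos_def)
qed

lemma sqser_commute:
  assumes "clin C" "bnd C" "\<And>x. C (B x) = B (C x)"
  shows "C (sqser B x) = sqser B (C x)"
proof -
  have pc: "C ((B ^^ k) y) = (B ^^ k) (C y)" for k y
    by (induction k) (simp_all add: assms(3))
  have "C (sqser B x) = (\<Sum>k. C (gco k *\<^sub>R (B ^^ k) x))"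
    unfolding sqser_def
    by (rule bounded_linear.suminf[OF clin_bnd_bounded_linear[OF assms(1,2)] summable_terms])
  also have "\<dots> = sqser B (C x)" unfolding sqser_def by (simp add: clin_scaleR[OF assms(1)] pc)
  finally show ?thesis .
qed

end



definition psum :: "('a::complex_inner \<Rightarrow> 'a) \<Rightarrow> nat \<Rightarrow> 'a \<Rightarrow> 'a" where
  "psum B N x = (\<Sum>k<N. gco k *\<^sub>R (B ^^ k) x)"

definition trm :: "('a::complex_inner \<Rightarrow> 'a) \<Rightarrow> 'a \<Rightarrow> nat \<times> nat \<Rightarrow> 'a" where
  "trm B x = (\<lambda>(i,j). (gco i * gco j) *\<^sub>R (B ^^ (i+j)) x)"

definition hh :: "nat \<times> nat \<Rightarrow> real" where
  "hh = (\<lambda>(i,j). \<bar>gco i\<bar> * \<bar>gco j\<bar>)"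

abbreviation S1 :: "nat \<Rightarrow> (nat \<times> nat) set" where "S1 N \<equiv> {..<N} \<times> {..<N}"
abbreviation S2 :: "nat \<Rightarrow> (nat \<times> nat) set" where "S2 N \<equiv> {(i,j). i + j < N}"

lemma S2_sub: "S2 N \<subseteq> S1 N" by auto
lemma S2_fin: "finite (S2 N)" by (rule finite_subset[OF S2_sub]) simp

lemma hh_tendsto: "(\<lambda>N. sum hh (S1 N) - sum hh (S2 N)) \<longlonglongrightarrow> 0"
proof -
  let ?s = "\<Sum>k. \<bar>gco k\<bar>"
  have "sum hh (S1 N) = (\<Sum>i<N. \<bar>gco i\<bar>) * (\<Sum>j<N. \<bar>gco j\<bar>)" for N
    by (simp add: hh_def sum_product sum.cartesian_product)
  moreover have "(\<lambda>N. (\<Sum>i<N. \<bar>gco i\<bar>) * (\<Sum>j<N. \<bar>gco j\<bar>)) \<longlonglongrightarrow> ?s * ?s"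
    by (intro tendsto_mult summable_LIMSEQ gco_abs_summable)
  ultimately have 1: "(\<lambda>N. sum hh (S1 N)) \<longlonglongrightarrow> ?s * ?s" by simp
  have "sum hh (S2 N) = (\<Sum>n<N. \<Sum>i\<le>n. \<bar>gco i\<bar> * \<bar>gco (n - i)\<bar>)" for N
    unfolding hh_def by (rule sum.triangle_reindex)
  moreover have "(\<lambda>n. \<Sum>i\<le>n. \<bar>gco i\<bar> * \<bar>gco (n - i)\<bar>) sums (?s * ?s)"
    by (rule Cauchy_product_sums) (simp_all add: gco_abs_summable)
  then have "(\<lambda>N. \<Sum>n<N. \<Sum>i\<le>n. \<bar>gco i\<bar> * \<bar>gco (n - i)\<bar>) \<longlonglongrightarrow> ?s * ?s"
    by (simp add: sums_def)
  ultimately have 2: "(\<lambda>N. sum hh (S2 N)) \<longlonglongrightarrow> ?s * ?s" by simp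
  show ?thesis using tendsto_diff[OF 1 2] by simp
qed

lemma hh_mono: "sum hh (S2 N) \<le> sum hh (S1 N)"
  by (rule sum_mono2[OF _ S2_sub]) (auto simp: hh_def)

context contr_op
begin

lemma psum_tendsto: "(\<lambda>N. psum B N x) \<longlonglongrightarrow> sqser B x"
  unfolding psum_def sqser_def by (rule summable_LIMSEQ[OF summable_terms])

lemma psum_bound: "norm (psum B N y) \<le> 2 * norm y"
proof -
  have "norm (psum B N y) \<le> (\<Sum>k<N. norm (gco k *\<^sub>R (B ^^ k) y))"
    unfolding psum_def by (rule norm_sum)
  also have "\<dots> \<le> (\<Sum>k<N. \<bar>gco k\<bar> * norm y)" by (rule sum_mono[OF term_bound])
  also have "\<dots> = (\<Sum>k<N. \<bar>gco k\<bar>) * norm y" by (simp add: sum_distrib_right)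
  also have "\<dots> \<le> 2 * norm y" by (rule mult_right_mono[OF gco_partial_bound]) simp
  finally show ?thesis .
qed

lemma psum_diff: "psum B N (a - b) = psum B N a - psum B N b"
  unfolding psum_def by (simp add: clin_diff[OF clin_pow[OF lin]] scaleR_diff_right sum_subtractf)

lemma psum_sq_tendsto: "(\<lambda>N. psum B N (psum B N x)) \<longlonglongrightarrow> sqser B (sqser B x)"
proof -
  define v where "v = sqser B x"
  have a: "(\<lambda>N. psum B N x - v) \<longlonglongrightarrow> 0" unfolding v_def by (rule LIM_zero[OF psum_tendsto])
  have b: "(\<lambda>N. psum B N (psum B N x - v)) \<longlonglongrightarrow> 0"
  proof (rule tendsto_0_le[OF a, where K=2])
    show "\<forall>\<^sub>F N in sequentially. norm (psum B N (psum B N x - v)) \<le> norm (psum B N x - v) * 2"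
      by (intro always_eventually allI, rule order_trans[OF psum_bound], simp)
  qed
  have "(\<lambda>N. psum B N (psum B N x - v) + psum B N v) \<longlonglongrightarrow> 0 + sqser B v"
    by (rule tendsto_add[OF b psum_tendsto])
  then show ?thesis by (simp add: psum_diff v_def)
qed

lemma psum_sq_eq: "psum B N (psum B N x) = sum (trm B x) (S1 N)"
proof -
  have "psum B N (psum B N x) = (\<Sum>i<N. gco i *\<^sub>R (\<Sum>j<N. gco j *\<^sub>R (B ^^ i) ((B ^^ j) x)))"
    unfolding psum_def by (simp add: clin_sum[OF clin_pow[OF lin]] clin_scaleR[OF clin_pow[OF lin]])
  also have "\<dots> = (\<Sum>i<N. \<Sum>j<N. trm B x (i,j))"
    by (simp add: trm_def scaleR_sum_right funpow_add)
  also have "\<dots> = sum (trm B x) (S1 N)" by (simp add: sum.cartesian_product)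
  finally show ?thesis .
qed

lemma tri_eq: "sum (trm B x) (S2 N) = (\<Sum>n<N. (\<Sum>i\<le>n. gco i * gco (n - i)) *\<^sub>R (B ^^ n) x)"
proof -
  have "sum (trm B x) (S2 N) = (\<Sum>n<N. \<Sum>i\<le>n. (gco i * gco (n - i)) *\<^sub>R (B ^^ (i + (n - i))) x)"
    unfolding trm_def by (rule sum.triangle_reindex)
  also have "\<dots> = (\<Sum>n<N. \<Sum>i\<le>n. (gco i * gco (n - i)) *\<^sub>R (B ^^ n) x)"
    by (rule sum.cong[OF refl], rule sum.cong[OF refl]) simp
  also have "\<dots> = (\<Sum>n<N. (\<Sum>i\<le>n. gco i * gco (n - i)) *\<^sub>R (B ^^ n) x)"
    by (simp add: scaleR_sum_left)
  finally show ?thesis .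
qed

lemma tri_val: "N \<ge> 2 \<Longrightarrow> sum (trm B x) (S2 N) = x - B x"
proof (induction N)
  case 0 then show ?case by simp
next
  case (Suc N)
  show ?case
  proof (cases "N < 2")
    case True
    then have "Suc N = 2" using Suc.prems by simp
    then show ?thesis unfolding tri_eq using gco_cauchy
      by (simp add: lessThan_Suc numeral_2_eq_2 atMost_Suc)
  next
    case False
    then have "sum (trm B x) (S2 N) = x - B x" using Suc.IH by simp
    then show ?thesis using False unfolding tri_eq by (simp add: gco_cauchy)
  qed
qed

lemma diff_bound: "norm (sum (trm B x) (S1 N) - sum (trm B x) (S2 N)) \<le> (sum hh (S1 N) - sum hh (S2 N)) * norm x"
proof -
  have "sum (trm B x) (S1 N) - sum (trm B x) (S2 N) = sum (trm B x) (S1 N - S2 N)"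
    by (rule sum_diff[symmetric]) (simp_all add: S2_sub)
  then have "norm (sum (trm B x) (S1 N) - sum (trm B x) (S2 N)) \<le> (\<Sum>p\<in>S1 N - S2 N. norm (trm B x p))"
    by (simp add: norm_sum)
  also have "\<dots> \<le> (\<Sum>p\<in>S1 N - S2 N. hh p * norm x)"
  proof (rule sum_mono)
    fix p assume "p \<in> S1 N - S2 N"
    obtain i j where p: "p = (i,j)" by force
    have "norm (trm B x p) = \<bar>gco i\<bar> * \<bar>gco j\<bar> * norm ((B ^^ (i+j)) x)"
      by (simp add: p trm_def abs_mult)
    also have "\<dots> \<le> \<bar>gco i\<bar> * \<bar>gco j\<bar> * norm x"
      by (rule mult_left_mono[OF contr_pow[OF contr]]) simp
    finally show "norm (trm B x p) \<le> hh p * norm x" by (simp add: p hh_def)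
  qed
  also have "\<dots> = (\<Sum>p\<in>S1 N - S2 N. hh p) * norm x" by (simp add: sum_distrib_right)
  also have "(\<Sum>p\<in>S1 N - S2 N. hh p) = sum hh (S1 N) - sum hh (S2 N)"
    by (rule sum_diff) (simp_all add: S2_sub)
  finally show ?thesis .
qed

lemma sqser_sq: "sqser B (sqser B x) = x - B x"
proof -
  define d where "d N = sum (trm B x) (S1 N) - sum (trm B x) (S2 N)" for N
  have d0: "d \<longlonglongrightarrow> 0"
  proof (rule tendsto_0_le[OF hh_tendsto, where K="norm x"])
    show "\<forall>\<^sub>F N in sequentially. norm (d N) \<le> norm (sum hh (S1 N) - sum hh (S2 N)) * norm x"
    proof (intro always_eventually allI)
      fix N
      have "norm (d N) \<le> (sum hh (S1 N) - sum hh (S2 N)) * norm x" unfolding d_def by (rule diff_bound)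
      also have "\<dots> \<le> norm (sum hh (S1 N) - sum hh (S2 N)) * norm x"
        by (rule mult_right_mono) simp_all
      finally show "norm (d N) \<le> norm (sum hh (S1 N) - sum hh (S2 N)) * norm x" .
    qed
  qed
  have "(\<lambda>N. (x - B x) + d N) \<longlonglongrightarrow> (x - B x) + 0" by (rule tendsto_add[OF tendsto_const d0])
  moreover have "\<forall>\<^sub>F N in sequentially. (x - B x) + d N = psum B N (psum B N x)"
    unfolding eventually_sequentially
    by (rule exI[of _ 2]) (simp add: d_def psum_sq_eq tri_val)
  ultimately have "(\<lambda>N. psum B N (psum B N x)) \<longlonglongrightarrow> x - B x"
    by (simp add: Lim_transform_eventually)
  then show ?thesis using LIMSEQ_unique[OF psum_sq_tendsto] by blast
qed

end



definition comm_prop :: "('a::complex_inner \<Rightarrow> 'a) \<Rightarrow> ('a \<Rightarrow> 'a) \<Rightarrow> bool" where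
  "comm_prop A R \<longleftrightarrow> (\<forall>C. clin C \<and> bnd C \<and> (\<forall>x. C (A x) = A (C x)) \<longrightarrow> (\<forall>x. C (R x) = R (C x)))"

lemma sqrt_exists:
  fixes A :: "'a::chilbert \<Rightarrow> 'a"
  assumes A: "bpos A"
  shows "\<exists>R. bpos R \<and> (\<forall>x. R (R x) = A x) \<and> comm_prop A R"
proof -
  have lA: "clin A" and sA: "hsym A" and pA: "hpos A" using A by (auto simp: bpos_def)
  obtain c where c0: "c > 0" and c: "\<And>x. norm (A x) \<le> c * norm x"
    using bnd_pos[of A] A by (auto simp: bpos_def)
  define B where "B x = x - (1/c) *\<^sub>R A x" for x
  have lB: "clin B"
    unfolding clin_def B_def
    by (simp add: clin_add[OF lA] clin_scaleC[OF lA] scaleC_diff_right scaleC_scaleR_commute scaleR_add_right)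
  have sB: "hsym B"
    unfolding hsym_def B_def
    by (simp add: cinner_diff_left cinner_diff_right cinner_scaleR_left cinner_scaleR_right
        sA[unfolded hsym_def])
  have reB: "Re (cinner x (B x)) = (norm x)\<^sup>2 - (1/c) * Re (cinner x (A x))" for x
    by (simp add: B_def cinner_diff_right cinner_scaleR_right cinner_self_Re)
  have pB: "hpos B"
  proof -
    have "0 \<le> Re (cinner x (B x))" for x
    proof -
      have "Re (cinner x (A x)) \<le> cmod (cinner x (A x))" by (rule complex_Re_le_cmod)
      also have "\<dots> \<le> norm x * norm (A x)" by (rule cs)
      also have "\<dots> \<le> norm x * (c * norm x)" by (rule mult_left_mono[OF c]) simp
      finally have "(1/c) * Re (cinner x (A x)) \<le> (norm x)\<^sup>2"
        using c0 by (simp add: field_simps power2_eq_square)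
      then show ?thesis unfolding reB by simp
    qed
    then show ?thesis by (simp add: hpos_def)
  qed
  have leB: "Re (cinner x (B x)) \<le> (norm x)\<^sup>2" for x
    unfolding reB using pA c0 by (simp add: hpos_def)
  have contr: "norm (B x) \<le> norm x" for x
  proof -
    have "(Re (cinner (B x) (B x)))\<^sup>2 \<le> Re (cinner (B x) (B (B x))) * Re (cinner x (B x))"
      by (rule gen_cs[OF lB sB pB])
    also have "\<dots> \<le> (norm (B x))\<^sup>2 * (norm x)\<^sup>2"
      by (rule mult_mono[OF leB leB]) (use pB in \<open>auto simp: hpos_def\<close>)
    finally have "(norm (B x))\<^sup>2 * (norm (B x))\<^sup>2 \<le> (norm (B x))\<^sup>2 * (norm x)\<^sup>2"
      by (simp add: cinner_self_Re power2_eq_square)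
    then have "(norm (B x))\<^sup>2 \<le> (norm x)\<^sup>2 \<or> norm (B x) = 0"
      by (metis mult_le_cancel_left_pos zero_less_power2 norm_eq_zero)
    then show ?thesis by (auto simp: power2_le_iff_abs_le)
  qed
  interpret contr_op B by standard (use lB sB contr in auto)
  define R where "R x = sqrt c *\<^sub>R sqser B x" for x
  have lR: "clin R"
    using sqser_clin unfolding R_def clin_def by (simp add: scaleC_scaleR_commute scaleR_add_right)
  have bR: "bnd R"
  proof -
    have "norm (R x) \<le> (sqrt c * 2) * norm x" for x
      unfolding R_def using sqser_bound[of x] c0 by (simp add: mult.assoc mult_left_mono)
    then show ?thesis by (auto simp: bnd_def)
  qed
  have sR: "hsym R"
    using sqser_hsym unfolding R_def hsym_def by (simp add: cinner_scaleR_left cinner_scaleR_right)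
  have pR: "hpos R"
    using sqser_hpos c0 unfolding R_def hpos_def by (simp add: cinner_scaleR_right)
  have sq: "R (R x) = A x" for x
  proof -
    have "R (R x) = (sqrt c * sqrt c) *\<^sub>R sqser B (sqser B x)"
      unfolding R_def by (simp add: clin_scaleR[OF sqser_clin])
    also have "\<dots> = c *\<^sub>R (x - B x)" using c0 by (simp add: sqser_sq)
    also have "\<dots> = A x" using c0 by (simp add: B_def)
    finally show ?thesis .
  qed
  have cp: "comm_prop A R"
  proof -
    have "C (R x) = R (C x)" if C: "clin C" "bnd C" "\<And>x. C (A x) = A (C x)" for C x
    proof -
      have "C (B y) = B (C y)" for y
        unfolding B_def by (simp add: clin_diff[OF C(1)] clin_scaleR[OF C(1)] C(3))
      then have "C (sqser B x) = sqser B (C x)" by (rule sqser_commute[OF C(1,2)])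
      then show ?thesis unfolding R_def by (simp add: clin_scaleR[OF C(1)])
    qed
    then show ?thesis by (auto simp: comm_prop_def)
  qed
  show ?thesis using lR bR sR pR sq cp by (intro exI[of _ R]) (simp add: bpos_def)
qed

definition sqrtb :: "('a::chilbert \<Rightarrow> 'a) \<Rightarrow> 'a \<Rightarrow> 'a" where
  "sqrtb A = (SOME R. bpos R \<and> (\<forall>x. R (R x) = A x) \<and> comm_prop A R)"

lemma sqrtb:
  assumes "bpos A"
  shows "bpos (sqrtb A)" "\<And>x. sqrtb A (sqrtb A x) = A x" "comm_prop A (sqrtb A)"
proof -
  have "bpos (sqrtb A) \<and> (\<forall>x. sqrtb A (sqrtb A x) = A x) \<and> comm_prop A (sqrtb A)"
    unfolding sqrtb_def by (rule someI_ex[OF sqrt_exists[OF assms]])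
  then show "bpos (sqrtb A)" "\<And>x. sqrtb A (sqrtb A x) = A x" "comm_prop A (sqrtb A)" by auto
qed

lemma sqrtb_commute:
  assumes "bpos A" "clin C" "bnd C" "\<And>x. C (A x) = A (C x)"
  shows "C (sqrtb A x) = sqrtb A (C x)"
  using sqrtb(3)[OF assms(1)] assms(2-4) unfolding comm_prop_def by blast

lemma sqrtb_unique:
  fixes A :: "'a::chilbert \<Rightarrow> 'a"
  assumes A: "bpos A" and R1: "bpos R1" and sq1: "\<And>x. R1 (R1 x) = A x"
  shows "R1 = sqrtb A"
proof
  fix x
  let ?R = "sqrtb A"
  have R: "bpos ?R" and sq: "\<And>x. ?R (?R x) = A x" using sqrtb[OF A] by auto
  have l1: "clin R1" "bnd R1" "hsym R1" "hpos R1" using R1 by (auto simp: bpos_def)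
  have l: "clin ?R" "bnd ?R" "hsym ?R" "hpos ?R" using R by (auto simp: bpos_def)
  have c1: "R1 (A z) = A (R1 z)" for z
  proof -
    have "R1 (A z) = R1 (R1 (R1 z))" by (simp only: sq1)
    also have "\<dots> = A (R1 z)" by (rule sq1)
    finally show ?thesis .
  qed
  have com: "R1 (?R z) = ?R (R1 z)" for z by (rule sqrtb_commute[OF A l1(1,2) c1])
  define y where "y = R1 x - ?R x"
  have "R1 y + ?R y = 0"
    unfolding y_def by (simp add: clin_diff[OF l1(1)] clin_diff[OF l(1)] sq1 sq com)
  then have "Re (cinner y (R1 y)) + Re (cinner y (?R y)) = 0"
    by (metis cinner_add_right cinner_zero_right plus_complex.sel(1) zero_complex.sel(1))
  moreover have "0 \<le> Re (cinner y (R1 y))" "0 \<le> Re (cinner y (?R y))"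
    using l1(4) l(4) by (auto simp: hpos_def)
  ultimately have "Re (cinner y (R1 y)) = 0" "Re (cinner y (?R y)) = 0" by linarith+
  then have z1: "R1 y = 0" and z2: "?R y = 0"
    using pos_zero[OF l1(1,3,4)] pos_zero[OF l(1,3,4)] by auto
  have "cinner y y = cinner y (R1 x) - cinner y (?R x)" by (simp add: y_def cinner_diff_right)
  also have "\<dots> = cinner (R1 y) x - cinner (?R y) x"
    using l1(3) l(3) by (simp add: hsym_def)
  also have "\<dots> = 0" by (simp add: z1 z2)
  finally have "y = 0" by (simp add: cinner_eq_zero_iff)
  then show "R1 x = ?R x" by (simp add: y_def)
qed



declare domIff[simp del]

lemma dense_eq:
  fixes f g :: "'a::topological_space \<Rightarrow> 'b::t2_space"
  assumes "continuous_on UNIV f" "continuous_on UNIV g" "closure D = UNIV" "\<And>x. x \<in> D \<Longrightarrow> f x = g x"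
  shows "f x = g x"
proof -
  have "closure D \<subseteq> {x. f x = g x}"
    by (rule closure_minimal) (use assms closed_Collect_eq[OF assms(1,2)] in auto)
  then show ?thesis using assms(3) by auto
qed

lemma dense_orth:
  fixes v :: "'a::complex_inner"
  assumes "closure D = UNIV" "\<And>f. f \<in> D \<Longrightarrow> cinner f v = 0"
  shows "v = 0"
proof -
  have c: "continuous_on UNIV (\<lambda>f. cinner f v)"
    by (rule linear_continuous_on[OF bl_cinner_left])
  have "cinner v v = (\<lambda>f. 0) v"
    by (rule dense_eq[OF c continuous_on_const assms(1)]) (use assms(2) in auto)
  then show ?thesis by (simp add: cinner_eq_zero_iff)
qed

definition pinv :: "('a \<Rightarrow> 'a) \<Rightarrow> 'a \<Rightarrow> 'a option" where
  "pinv K = (\<lambda>y. if y \<in> range K then Some (inv K y) else None)"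

lemma dom_pinv: "dom (pinv K) = range K"
  by (auto simp: pinv_def dom_def)

lemma pinv_apply: "inj K \<Longrightarrow> pinv K (K x) = Some x"
  by (simp add: pinv_def)

lemma pinv_the: "inj K \<Longrightarrow> the (pinv K (K x)) = x"
  by (simp add: pinv_def)

lemma pinv_comp: "inj R \<Longrightarrow> pinv R \<circ>\<^sub>m pinv R = pinv (\<lambda>x. R (R x))"
proof
  fix y assume i: "inj R"
  have iRR: "inj (\<lambda>x. R (R x))" using i by (simp add: inj_def)
  show "(pinv R \<circ>\<^sub>m pinv R) y = pinv (\<lambda>x. R (R x)) y"
  proof (cases "y \<in> range (\<lambda>x. R (R x))")
    case True
    then obtain x where y: "y = R (R x)" by auto
    show ?thesis using i pinv_apply[OF iRR, of x] by (simp add: y pinv_apply map_comp_def)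
  next
    case False
    then have n: "pinv (\<lambda>x. R (R x)) y = None" by (simp add: pinv_def)
    show ?thesis
    proof (cases "y \<in> range R")
      case True
      then obtain z where z: "y = R z" by auto
      have "z \<notin> range R" using False z by auto
      then show ?thesis using n i by (simp add: z pinv_apply map_comp_def) (simp add: pinv_def)
    next
      case False
      then show ?thesis using n by (simp add: map_comp_def pinv_def)
    qed
  qed
qed

lemma lin_op_pinv:
  assumes l: "clin K" and i: "inj K"
  shows "lin_op (pinv K)"
proof -
  have "0 \<in> range K" using clin_zero[OF l] by (metis rangeI)
  moreover have "x + y \<in> dom (pinv K) \<and> the (pinv K (x + y)) = the (pinv K x) + the (pinv K y)"
    if xy: "x \<in> dom (pinv K)" "y \<in> dom (pinv K)" for x y
  proof -
    obtain a b where "x = K a" "y = K b" using xy unfolding dom_pinv by blast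
    then show ?thesis using i clin_add[OF l, of a b, symmetric]
      by (simp add: dom_pinv pinv_the)
  qed
  moreover have "scaleC a x \<in> dom (pinv K) \<and> the (pinv K (scaleC a x)) = scaleC a (the (pinv K x))"
    if xd: "x \<in> dom (pinv K)" for a x
  proof -
    obtain b where "x = K b" using xd unfolding dom_pinv by blast
    then show ?thesis using i clin_scaleC[OF l, of a b, symmetric]
      by (simp add: dom_pinv pinv_the)
  qed
  ultimately show ?thesis by (simp add: lin_op_def dom_pinv)
qed

lemma adjoint_pinv:
  fixes K :: "'a::complex_inner \<Rightarrow> 'a"
  assumes s: "hsym K" and i: "inj K"
  shows "adjoint_op (pinv K) = pinv K"
proof
  fix g
  let ?P = "\<lambda>h. \<forall>f\<in>dom (pinv K). cinner (the (pinv K f)) g = cinner f h"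
  have Pequiv: "?P h \<longleftrightarrow> g = K h" for h
  proof
    assume P: "?P h"
    have "cinner u g = cinner u (K h)" for u
    proof -
      have "cinner u g = cinner (K u) h" using P[rule_format, of "K u"] i by (simp add: dom_pinv pinv_the)
      also have "\<dots> = cinner u (K h)" using s by (simp add: hsym_def)
      finally show ?thesis .
    qed
    then have "cinner (g - K h) (g - K h) = 0"
      by (simp add: cinner_diff_left cinner_diff_right)
    then show "g = K h" by (simp add: cinner_eq_zero_iff)
  next
    assume g: "g = K h"
    show "?P h"
    proof
      fix f assume "f \<in> dom (pinv K)"
      then obtain u where f: "f = K u" by (auto simp: dom_pinv)
      show "cinner (the (pinv K f)) g = cinner f h" using s i by (simp add: f g pinv_the hsym_def)
    qed
  qed
  show "adjoint_op (pinv K) g = pinv K g"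
  proof (cases "g \<in> range K")
    case True
    then obtain h where g: "g = K h" by auto
    have "(THE h. ?P h) = h"
    proof (rule the_equality)
      show "?P h" using Pequiv[of h] g by blast
    next
      fix h' assume "?P h'"
      then have "g = K h'" using Pequiv[of h'] by blast
      then show "h' = h" using g i by (simp add: inj_eq)
    qed
    moreover have "\<exists>h. ?P h" using Pequiv g by auto
    ultimately show ?thesis using i by (simp add: adjoint_op_def g pinv_apply del: dom_def)
  next
    case False
    then have "\<not> (\<exists>h. ?P h)" using Pequiv by auto
    then show ?thesis using False by (simp add: adjoint_op_def pinv_def del: dom_def)
  qed
qed

lemma self_adjoint_pinv:
  fixes K :: "'a::complex_inner \<Rightarrow> 'a"
  assumes "clin K" "hsym K" "inj K" "closure (range K) = UNIV"
  shows "self_adjoint_op (pinv K)"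
  using assms by (simp add: self_adjoint_op_def lin_op_pinv adjoint_pinv dom_pinv)

lemma positive_pinv:
  fixes K :: "'a::complex_inner \<Rightarrow> 'a"
  assumes "hsym K" "hpos K" "inj K"
  shows "positive_op (pinv K)"
proof -
  have "\<exists>r\<ge>0. cinner f (the (pinv K f)) = complex_of_real r" if fd: "f \<in> dom (pinv K)" for f
  proof -
    obtain u where f: "f = K u" using fd unfolding dom_pinv by blast
    have "cinner f (the (pinv K f)) = cinner (K u) u" using assms(3) by (simp add: f pinv_the)
    also have "\<dots> = cinner u (K u)" using assms(1) by (simp add: hsym_def)
    also have "\<dots> = of_real (Re (cinner u (K u)))" by (rule hsym_real[OF assms(1)])
    finally show ?thesis using assms(2) by (auto simp: hpos_def)
  qed
  then show ?thesis by (simp add: positive_op_def)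
qed

lemma sa_sym:
  fixes S :: "'a::complex_inner op"
  assumes sa: "self_adjoint_op S" and f: "f \<in> dom S" and g: "g \<in> dom S"
  shows "cinner (the (S f)) g = cinner f (the (S g))"
proof -
  let ?P = "\<lambda>h. \<forall>f\<in>dom S. cinner (the (S f)) g = cinner f h"
  have adj: "adjoint_op S = S" and dense: "closure (dom S) = UNIV" using sa by (auto simp: self_adjoint_op_def)
  have ex: "\<exists>h. ?P h"
  proof (rule ccontr)
    assume "\<not> (\<exists>h. ?P h)"
    then have "adjoint_op S g = None" by (simp add: adjoint_op_def del: dom_def)
    then show False using adj g by auto
  qed
  have uniq: "h1 = h2" if "?P h1" "?P h2" for h1 h2
  proof -
    have "h1 - h2 = 0"
      by (rule dense_orth[OF dense]) (use that in \<open>auto simp: cinner_diff_right\<close>)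
    then show ?thesis by simp
  qed
  obtain h0 where h0: "?P h0" using ex by blast
  have "?P (THE h. ?P h)" by (rule theI[of _ h0]) (use h0 uniq in blast)+
  moreover have "S g = Some (THE h. ?P h)"
  proof -
    have "S g = adjoint_op S g" using adj by simp
    also have "\<dots> = Some (THE h. ?P h)" using ex unfolding adjoint_op_def by (simp only: if_True)
    finally show ?thesis .
  qed
  ultimately show ?thesis using f by auto
qed



lemma sqrtb_inj_dense:
  fixes A :: "'a::chilbert \<Rightarrow> 'a"
  assumes A: "bpos A" and i: "inj A" and d: "closure (range A) = UNIV"
  shows "inj (sqrtb A)" "closure (range (sqrtb A)) = UNIV" "range A \<subseteq> range (sqrtb A)"
proof -
  let ?R = "sqrtb A"
  have sq: "\<And>x. ?R (?R x) = A x" using sqrtb[OF A] by auto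
  show "inj ?R"
  proof (rule injI)
    fix x y assume "?R x = ?R y"
    then have "A x = A y" by (metis sq)
    then show "x = y" using i by (simp add: inj_eq)
  qed
  show sub: "range A \<subseteq> range ?R" using sq by (metis image_subset_iff rangeI)
  show "closure (range ?R) = UNIV" using closure_mono[OF sub] d by auto
qed

lemma op_sqrt_pinv:
  fixes A :: "'a::chilbert \<Rightarrow> 'a"
  assumes A: "bpos A" and i: "inj A" and d: "closure (range A) = UNIV"
  shows "op_sqrt (pinv A) = pinv (sqrtb A)"
proof -
  let ?R = "sqrtb A"
  have R: "bpos ?R" and sq: "\<And>x. ?R (?R x) = A x" using sqrtb[OF A] by auto
  have lR: "clin ?R" "bnd ?R" "hsym ?R" "hpos ?R" using R by (auto simp: bpos_def)
  note iR = sqrtb_inj_dense[OF A i d]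
  have lA: "clin A" and bA: "bnd A" using A by (auto simp: bpos_def)
  have RR: "(\<lambda>x. ?R (?R x)) = A" using sq by auto
  have P: "self_adjoint_op (pinv ?R) \<and> positive_op (pinv ?R) \<and> pinv ?R \<circ>\<^sub>m pinv ?R = pinv A"
    using self_adjoint_pinv[OF lR(1,3) iR(1,2)] positive_pinv[OF lR(3,4) iR(1)] pinv_comp[OF iR(1)] RR
    by simp
  have U: "S = pinv ?R" if S: "self_adjoint_op S" "positive_op S" "S \<circ>\<^sub>m S = pinv A" for S
  proof -
    have lin: "lin_op S" using S(1) by (simp add: self_adjoint_op_def)
    have d0: "0 \<in> dom S"
      and dadd: "\<And>x y. x \<in> dom S \<Longrightarrow> y \<in> dom S \<Longrightarrow> x + y \<in> dom S \<and> the (S (x + y)) = the (S x) + the (S y)"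
      and dsc: "\<And>a x. x \<in> dom S \<Longrightarrow> scaleC a x \<in> dom S \<and> the (S (scaleC a x)) = scaleC a (the (S x))"
      using lin by (auto simp: lin_op_def)
    have S0: "S 0 = Some 0"
    proof -
      have "the (S (scaleC 0 0)) = scaleC 0 (the (S 0))" using dsc[OF d0] by blast
      then have "the (S 0) = 0" by simp
      then show ?thesis using d0 by (auto simp: domIff)
    qed
    have SS: "(S \<circ>\<^sub>m S) y = pinv A y" for y using S(3) by simp
    have surj: "\<exists>z\<in>dom S. S z = Some x" for x
    proof -
      have "(S \<circ>\<^sub>m S) (A x) = Some x" using SS[of "A x"] pinv_apply[OF i] by simp
      then obtain w where "S (A x) = Some w" "S w = Some x" by (auto simp: map_comp_def split: option.splits)
      then show ?thesis by (auto simp: domIff)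
    qed
    have dneg: "z \<in> dom S \<Longrightarrow> - z \<in> dom S \<and> the (S (- z)) = - the (S z)" for z
      using dsc[of z "-1"] by (simp add: scaleC_of_real[of "-1", simplified])
    have injS: "z1 = z2" if z: "z1 \<in> dom S" "z2 \<in> dom S" "the (S z1) = the (S z2)" for z1 z2
    proof -
      have "z1 + - z2 \<in> dom S" "the (S (z1 + - z2)) = 0"
        using dadd[OF z(1) dneg[OF z(2), THEN conjunct1]] dneg[OF z(2)] z(3) by auto
      then have "S (z1 - z2) = Some 0" by (auto simp: domIff)
      then have "(S \<circ>\<^sub>m S) (z1 - z2) = Some 0" using S0 by (simp add: map_comp_def)
      then have "pinv A (z1 - z2) = Some 0" using SS by simp
      then have "z1 - z2 \<in> range A" "inv A (z1 - z2) = 0" by (auto simp: pinv_def split: if_splits)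
      then have "z1 - z2 = A 0" by (metis f_inv_into_f)
      then show ?thesis using clin_zero[OF lA] by simp
    qed
    define P where "P x = (SOME z. z \<in> dom S \<and> S z = Some x)" for x
    have Pd: "P x \<in> dom S" and PS: "S (P x) = Some x" for x
      using someI_ex[OF surj[of x, unfolded Bex_def]] by (auto simp: P_def)
    have Pthe: "the (S (P x)) = x" for x using PS by simp
    have Puniq: "z \<in> dom S \<Longrightarrow> the (S z) = x \<Longrightarrow> P x = z" for z x
      using injS[OF Pd] Pthe by metis
    have iP: "inj P" by (rule injI) (metis Pthe)
    have Seq: "S = pinv P"
    proof
      fix y
      show "S y = pinv P y"
      proof (cases "y \<in> dom S")
        case True
        then obtain w where w: "S y = Some w" by (auto simp: domIff)
        then have "P w = y" using Puniq[OF True] by simp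
        then show ?thesis using w iP pinv_apply[OF iP, of w] by simp
      next
        case False
        then have "y \<notin> range P" using Pd by auto
        then show ?thesis using False by (simp add: pinv_def domIff)
      qed
    qed
    have lP: "clin P"
    proof -
      have "P (x + y) = P x + P y" for x y
        by (rule Puniq) (use dadd[OF Pd Pd] Pthe in auto)
      moreover have "P (scaleC a x) = scaleC a (P x)" for a x
        by (rule Puniq) (use dsc[OF Pd] Pthe in auto)
      ultimately show ?thesis by (simp add: clin_def)
    qed
    have sP: "hsym P"
    proof -
      have "cinner (P x) y = cinner x (P y)" for x y
      proof -
        have "cinner (P x) y = cinner (P x) (the (S (P y)))" by (simp add: Pthe)
        also have "\<dots> = cinner (the (S (P x))) (P y)" by (rule sa_sym[OF S(1) Pd Pd, symmetric])
        also have "\<dots> = cinner x (P y)" by (simp add: Pthe)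
        finally show ?thesis .
      qed
      then show ?thesis by (simp add: hsym_def)
    qed
    have pP: "hpos P"
    proof -
      have "0 \<le> Re (cinner x (P x))" for x
      proof -
        obtain r where r: "r \<ge> 0" "cinner (P x) (the (S (P x))) = complex_of_real r"
          using S(2) Pd[of x] by (auto simp: positive_op_def)
        have "cinner x (P x) = cnj (cinner (P x) x)" by (rule cinner_conj)
        also have "\<dots> = of_real r" using r by (simp add: Pthe)
        finally show ?thesis using r by simp
      qed
      then show ?thesis by (simp add: hpos_def)
    qed
    have PP: "P (P x) = A x" for x
    proof -
      have "(S \<circ>\<^sub>m S) (P (P x)) = Some x" using PS by (simp add: map_comp_def)
      then have "pinv A (P (P x)) = Some x" using SS by simp
      then have "P (P x) \<in> range A" "inv A (P (P x)) = x" by (auto simp: pinv_def split: if_splits)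
      then show ?thesis by (metis f_inv_into_f)
    qed
    have bP: "bnd P"
    proof -
      obtain c where c0: "c > 0" and c: "\<And>x. norm (A x) \<le> c * norm x" using bnd_pos[OF bA] by auto
      have "norm (P x) \<le> sqrt c * norm x" for x
      proof -
        have "(norm (P x))\<^sup>2 = Re (cinner (P x) (P x))" by (simp add: cinner_self_Re)
        also have "\<dots> = Re (cinner x (A x))" using sP by (simp add: hsym_def PP)
        also have "\<dots> \<le> cmod (cinner x (A x))" by (rule complex_Re_le_cmod)
        also have "\<dots> \<le> norm x * norm (A x)" by (rule cs)
        also have "\<dots> \<le> norm x * (c * norm x)" by (rule mult_left_mono[OF c]) simp
        also have "\<dots> = (sqrt c * norm x)\<^sup>2" using c0 by (simp add: power2_eq_square power_mult_distrib)
        finally show ?thesis using c0 by (simp add: power2_le_iff_abs_le)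
      qed
      then show ?thesis by (auto simp: bnd_def)
    qed
    have "P = ?R" by (rule sqrtb_unique[OF A _ PP]) (simp add: bpos_def lP bP sP pP)
    then show ?thesis using Seq by simp
  qed
  show ?thesis unfolding op_sqrt_def by (rule the_equality) (use P U in auto)
qed



locale wsetup =
  fixes W :: "'a::chilbert op"
  assumes sa: "self_adjoint_op W" and zero_res: "0 \<notin> op_spectrum W"
begin

lemma bijW: "bij_betw (\<lambda>x. the (W x)) (dom W) UNIV"
  and boundW: "\<exists>C. \<forall>x\<in>dom W. norm x \<le> C * norm (the (W x))"
  using zero_res by (auto simp: op_spectrum_def)

lemma injW: "inj_on (\<lambda>x. the (W x)) (dom W)" using bijW by (rule bij_betw_imp_inj_on)
lemma surjW: "(\<lambda>x. the (W x)) ` dom W = UNIV" using bijW by (rule bij_betw_imp_surj_on)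

definition T :: "'a \<Rightarrow> 'a" where "T = inv_into (dom W) (\<lambda>x. the (W x))"

lemma Td: "T y \<in> dom W" unfolding T_def by (rule inv_into_into) (simp add: surjW)
lemma WT: "the (W (T y)) = y" unfolding T_def by (rule f_inv_into_f) (simp add: surjW)
lemma TW: "x \<in> dom W \<Longrightarrow> T (the (W x)) = x" unfolding T_def by (rule inv_into_f_f[OF injW])

lemma injT: "inj T" by (rule injI) (metis WT)
lemma rangeT: "range T = dom W"
proof
  show "range T \<subseteq> dom W" using Td by auto
  show "dom W \<subseteq> range T"
  proof
    fix x assume "x \<in> dom W"
    then have "x = T (the (W x))" by (simp add: TW)
    then show "x \<in> range T" by (rule image_eqI) simp
  qed
qed

lemma W_pinv: "W = pinv T"
proof
  fix y
  show "W y = pinv T y"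
  proof (cases "y \<in> dom W")
    case True
    then have "y = T (the (W y))" by (simp add: TW)
    then have "pinv T y = Some (the (W y))" by (metis pinv_apply[OF injT])
    then show ?thesis using True by (auto simp: domIff)
  next
    case False
    then show ?thesis using rangeT by (auto simp: pinv_def domIff)
  qed
qed

lemma linW: "lin_op W" using sa by (simp add: self_adjoint_op_def)
lemma denseW: "closure (dom W) = UNIV" using sa by (simp add: self_adjoint_op_def)

lemma clinT: "clin T"
proof -
  have "T (a + b) = T a + T b" for a b
  proof -
    have "T a + T b \<in> dom W" "the (W (T a + T b)) = a + b"
      using linW Td WT by (auto simp: lin_op_def)
    then show ?thesis by (metis TW)
  qed
  moreover have "T (scaleC c a) = scaleC c (T a)" for c a
  proof -
    have "scaleC c (T a) \<in> dom W" "the (W (scaleC c (T a))) = scaleC c a"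
      using linW Td WT by (auto simp: lin_op_def)
    then show ?thesis by (metis TW)
  qed
  ultimately show ?thesis by (simp add: clin_def)
qed

lemma bndT: "bnd T"
proof -
  obtain C where C: "\<And>x. x \<in> dom W \<Longrightarrow> norm x \<le> C * norm (the (W x))" using boundW by auto
  have "norm (T y) \<le> C * norm y" for y using C[OF Td[of y]] by (simp add: WT)
  then show ?thesis by (auto simp: bnd_def)
qed

lemma hsymT: "hsym T"
proof -
  have "cinner (T x) y = cinner x (T y)" for x y
  proof -
    have "cinner (T x) y = cinner (T x) (the (W (T y)))" by (simp add: WT)
    also have "\<dots> = cinner (the (W (T x))) (T y)" by (rule sa_sym[OF sa Td Td, symmetric])
    also have "\<dots> = cinner x (T y)" by (simp add: WT)
    finally show ?thesis .
  qed
  then show ?thesis by (simp add: hsym_def)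
qed

definition A0 :: "'a \<Rightarrow> 'a" where "A0 x = T (T x)"

lemma bposA0: "bpos A0"
proof -
  have "clin A0" using clin_comp[OF clinT clinT] by (simp add: A0_def[abs_def] comp_def)
  moreover have "bnd A0" using bnd_comp[OF bndT bndT] by (simp add: A0_def[abs_def] comp_def)
  moreover have "hsym A0" using hsymT by (simp add: hsym_def A0_def)
  moreover have "hpos A0"
  proof -
    have "cinner x (A0 x) = cinner (T x) (T x)" for x using hsymT by (simp add: hsym_def A0_def)
    then show ?thesis by (simp add: hpos_def cinner_self_Re)
  qed
  ultimately show ?thesis by (simp add: bpos_def)
qed

lemma injA0: "inj A0" using injT by (simp add: inj_def A0_def)

lemma T_cont: "continuous_on S T" by (rule clin_bnd_continuous[OF clinT bndT])

lemma denseA0: "closure (range A0) = UNIV"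
proof -
  have "T ` closure (dom W) \<subseteq> closure (range A0)"
    by (rule image_closure_subset[OF T_cont]) (auto simp: A0_def simp flip: rangeT intro: closure_subset[THEN subsetD])
  then have "dom W \<subseteq> closure (range A0)" using denseW rangeT by simp
  then have "closure (dom W) \<subseteq> closure (range A0)" by (metis closure_closure closure_mono)
  then show ?thesis using denseW by auto
qed

lemma WW: "W \<circ>\<^sub>m W = pinv A0"
proof -
  have e: "pinv T \<circ>\<^sub>m pinv T = pinv A0" using pinv_comp[OF injT] unfolding A0_def[abs_def] .
  show ?thesis by (subst (1 2) W_pinv) (rule e)
qed

definition M :: "'a \<Rightarrow> 'a" where "M = sqrtb A0"

lemma absW: "op_abs W = pinv M"
  unfolding op_abs_def WW M_def by (rule op_sqrt_pinv[OF bposA0 injA0 denseA0])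

lemma bposM: "bpos M" and MM: "M (M x) = A0 x" using sqrtb[OF bposA0] by (auto simp: M_def)
lemma injM: "inj M" and denseM: "closure (range M) = UNIV" and rA0M: "range A0 \<subseteq> range M"
  using sqrtb_inj_dense[OF bposA0 injA0 denseA0] by (auto simp: M_def)

definition K :: "'a \<Rightarrow> 'a" where "K = sqrtb M"

lemma SW: "krein_S W = pinv K"
  unfolding krein_S_def absW K_def by (rule op_sqrt_pinv[OF bposM injM denseM])

lemma bposK: "bpos K" and KK: "K (K x) = M x" using sqrtb[OF bposM] by (auto simp: K_def)
lemma injK: "inj K" and denseK: "closure (range K) = UNIV" and rMK: "range M \<subseteq> range K"
  using sqrtb_inj_dense[OF bposM injM denseM] by (auto simp: K_def)

lemma lM: "clin M" "bnd M" "hsym M" "hpos M" using bposM by (auto simp: bpos_def)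
lemma lK: "clin K" "bnd K" "hsym K" "hpos K" using bposK by (auto simp: bpos_def)

lemma TM: "T (M x) = M (T x)"
  unfolding M_def by (rule sqrtb_commute[OF bposA0 clinT bndT]) (simp add: A0_def)
lemma TK: "T (K x) = K (T x)"
  unfolding K_def by (rule sqrtb_commute[OF bposM clinT bndT TM])
lemma MK: "M (K x) = K (M x)"
  unfolding K_def by (rule sqrtb_commute[OF bposM lM(1,2)]) simp

lemma normT: "norm (T u) = norm (M u)"
proof -
  have "(norm (T u))\<^sup>2 = Re (cinner (T u) (T u))" by (simp add: cinner_self_Re)
  also have "\<dots> = Re (cinner u (A0 u))" using hsymT by (simp add: hsym_def A0_def)
  also have "\<dots> = Re (cinner (M u) (M u))" using lM(3) by (simp add: hsym_def MM)
  also have "\<dots> = (norm (M u))\<^sup>2" by (simp add: cinner_self_Re)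
  finally show ?thesis by (simp add: power2_eq_iff_nonneg)
qed

lemma M_cont: "continuous_on S M" by (rule clin_bnd_continuous[OF lM(1,2)])
lemma K_cont: "continuous_on S K" by (rule clin_bnd_continuous[OF lK(1,2)])

lemma J_exists: "\<exists>g. continuous_on UNIV g \<and> (\<forall>u. g (M u) = T u)"
proof -
  let ?V = "\<lambda>y. T (inv M y)"
  have uc: "uniformly_continuous_on (range M) ?V"
    unfolding uniformly_continuous_on_def
  proof (intro allI impI)
    fix e :: real assume "e > 0"
    have "dist (?V (M a)) (?V (M b)) = dist (M a) (M b)" for a b
    proof -
      have "dist (?V (M a)) (?V (M b)) = norm (T a - T b)" using injM by (simp add: dist_norm)
      also have "\<dots> = norm (T (a - b))" by (simp add: clin_diff[OF clinT])
      also have "\<dots> = norm (M (a - b))" by (rule normT)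
      also have "\<dots> = dist (M a) (M b)" by (simp add: clin_diff[OF lM(1)] dist_norm)
      finally show ?thesis .
    qed
    then show "\<exists>d>0. \<forall>x\<in>range M. \<forall>x'\<in>range M. dist x' x < d \<longrightarrow> dist (?V x') (?V x) < e"
      using \<open>e > 0\<close> by (intro exI[of _ e]) auto
  qed
  obtain g where g1: "uniformly_continuous_on (closure (range M)) g" and g2: "\<And>x. x \<in> range M \<Longrightarrow> ?V x = g x"
    using uniformly_continuous_on_extension_on_closure[OF uc] by metis
  have "continuous_on UNIV g" using uniformly_continuous_imp_continuous[OF g1] denseM by simp
  moreover have "g (M u) = T u" for u using g2[of "M u"] injM by simp
  ultimately show ?thesis by blast
qed

definition J :: "'a \<Rightarrow> 'a" where "J = (SOME g. continuous_on UNIV g \<and> (\<forall>u. g (M u) = T u))"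

lemma J_cont: "continuous_on UNIV J" and JM: "J (M u) = T u"
  using someI_ex[OF J_exists] by (auto simp: J_def)

lemma J_cont': "continuous_on S J" using J_cont continuous_on_subset by blast

lemma J_norm: "norm (J y) = norm y"
proof -
  have "norm (J y) = (\<lambda>y. norm y) y"
  proof (rule dense_eq[OF _ _ denseM])
    show "continuous_on UNIV (\<lambda>y. norm (J y))" by (intro continuous_on_norm J_cont)
    show "continuous_on UNIV (\<lambda>y. norm y)" by (intro continuous_on_norm continuous_on_id)
    show "norm (J x) = norm x" if "x \<in> range M" for x using that JM normT by auto
  qed
  then show ?thesis by simp
qed

lemma J_M: "J (M y) = M (J y)"
proof -
  have "(J \<circ> M) y = (M \<circ> J) y"
  proof (rule dense_eq[where f="J \<circ> M" and g="M \<circ> J", OF _ _ denseM])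
    show "continuous_on UNIV (J \<circ> M)" by (intro continuous_on_compose M_cont J_cont')
    show "continuous_on UNIV (M \<circ> J)" by (intro continuous_on_compose M_cont J_cont')
    show "(J \<circ> M) x = (M \<circ> J) x" if "x \<in> range M" for x using that JM TM by auto
  qed
  then show ?thesis by simp
qed

lemma J_K: "J (K y) = K (J y)"
proof -
  have "(J \<circ> K) y = (K \<circ> J) y"
  proof (rule dense_eq[where f="J \<circ> K" and g="K \<circ> J", OF _ _ denseM])
    show "continuous_on UNIV (J \<circ> K)" by (intro continuous_on_compose K_cont J_cont')
    show "continuous_on UNIV (K \<circ> J)" by (intro continuous_on_compose K_cont J_cont')
    show "(J \<circ> K) x = (K \<circ> J) x" if "x \<in> range M" for x
    proof -
      obtain u where x: "x = M u" using \<open>x \<in> range M\<close> by auto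
      have "J (K (M u)) = J (M (K u))" by (simp add: MK)
      also have "\<dots> = T (K u)" by (rule JM)
      also have "\<dots> = K (T u)" by (rule TK)
      also have "\<dots> = K (J (M u))" by (simp add: JM)
      finally show ?thesis by (simp add: x)
    qed
  qed
  then show ?thesis by simp
qed

lemma JJ: "J (J y) = y"
proof -
  have "(J \<circ> J) y = id y"
  proof (rule dense_eq[where f="J \<circ> J" and g="id", OF _ _ denseA0])
    show "continuous_on UNIV (J \<circ> J)" by (intro continuous_on_compose J_cont')
    show "continuous_on UNIV id" by (rule continuous_on_id')
    show "(J \<circ> J) x = id x" if "x \<in> range A0" for x
    proof -
      obtain u where x: "x = A0 u" using \<open>x \<in> range A0\<close> by auto
      have "J (J (M (M u))) = J (T (M u))" by (simp add: JM)
      also have "\<dots> = J (M (T u))" by (simp add: TM)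
      also have "\<dots> = T (T u)" by (rule JM)
      finally show ?thesis by (simp add: x MM A0_def)
    qed
  qed
  then show ?thesis by simp
qed

lemma TKJK: "T c = K (J (K c))"
proof -
  have "T c = J (M c)" by (simp add: JM)
  also have "\<dots> = J (K (K c))" by (simp add: KK)
  also have "\<dots> = K (J (K c))" by (rule J_K)
  finally show ?thesis .
qed

lemma TMJ: "T c = M (J c)" using JM[of c] J_M[of c] by simp

lemma domW_K: "dom W \<subseteq> range K"
proof
  fix x assume "x \<in> dom W"
  then obtain c where "x = T c" using rangeT by auto
  then have "x = K (J (K c))" by (simp add: TKJK)
  then show "x \<in> range K" by auto
qed

end



context wsetup
begin

lemma Kinv: "y \<in> range K \<Longrightarrow> K (inv K y) = y" by (simp add: f_inv_into_f)

lemma dS: "dom (krein_S W) = range K" by (simp add: SW dom_pinv)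
lemma theS: "the (krein_S W (K a)) = a" by (simp add: SW pinv_the[OF injK])
lemma Sdiff: "the (krein_S W (K a - K b)) = a - b"
  using theS[of "a - b"] by (simp add: clin_diff[OF lK(1)])

lemma J_tendsto: "(f \<longlongrightarrow> l) F \<Longrightarrow> ((\<lambda>n. J (f n)) \<longlongrightarrow> J l) F"
  by (rule continuous_on_tendsto_compose[OF J_cont]) auto

lemma part1: "(\<forall>n. xs n \<in> dom (krein_S W)) \<and>
        (\<forall>e>0. \<exists>N. \<forall>m\<ge>N. \<forall>n\<ge>N. norm (the (krein_S W (xs m - xs n))) < e) \<Longrightarrow>
        (\<exists>x\<in>dom (krein_S W). (\<lambda>n. norm (the (krein_S W (xs n - x)))) \<longlonglongrightarrow> 0)"
proof -
  assume a: "(\<forall>n. xs n \<in> dom (krein_S W)) \<and>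
        (\<forall>e>0. \<exists>N. \<forall>m\<ge>N. \<forall>n\<ge>N. norm (the (krein_S W (xs m - xs n))) < e)"
  define b where "b n = inv K (xs n)" for n
  have xb: "xs n = K (b n)" for n using a by (auto simp: dS b_def f_inv_into_f)
  have "Cauchy b"
  proof (rule CauchyI)
    fix e :: real assume "0 < e"
    then obtain N where "\<forall>m\<ge>N. \<forall>n\<ge>N. norm (the (krein_S W (xs m - xs n))) < e" using a by blast
    then show "\<exists>M. \<forall>m\<ge>M. \<forall>n\<ge>M. norm (b m - b n) < e" by (auto simp: xb Sdiff)
  qed
  then obtain l where l: "b \<longlonglongrightarrow> l" by (auto simp: Cauchy_convergent_iff convergent_def)
  have "(\<lambda>n. norm (the (krein_S W (xs n - K l)))) = (\<lambda>n. norm (b n - l))" by (simp add: xb Sdiff)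
  moreover have "(\<lambda>n. norm (b n - l)) \<longlonglongrightarrow> 0" by (intro tendsto_norm_zero LIM_zero l)
  ultimately have "(\<lambda>n. norm (the (krein_S W (xs n - K l)))) \<longlonglongrightarrow> 0" by simp
  moreover have "K l \<in> dom (krein_S W)" using dS by simp
  ultimately show ?thesis by blast
qed

lemma density: "x \<in> dom (krein_S W) \<Longrightarrow> e > 0 \<Longrightarrow> \<exists>y\<in>dom W. norm (the (krein_S W (x - y))) < e"
proof -
  assume x: "x \<in> dom (krein_S W)" and e: "e > 0"
  obtain a where xa: "x = K a" using x dS by auto
  obtain d where d: "d > 0" "\<And>z. dist z (J a) < d \<Longrightarrow> dist (J z) (J (J a)) < e"
    using J_cont e unfolding continuous_on_iff by (metis UNIV_I)
  have "J a \<in> closure (range K)" using denseK by simp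
  then obtain z where z: "z \<in> range K" "dist z (J a) < d" using d(1) unfolding closure_approachable by blast
  obtain c where zc: "z = K c" using z by auto
  have "dist (J (K c)) a < e" using d(2)[OF z(2)] JJ zc by simp
  then have "norm (a - J (K c)) < e" by (simp add: dist_norm norm_minus_commute)
  moreover have "T c \<in> dom W" by (rule Td)
  moreover have "the (krein_S W (x - T c)) = a - J (K c)" by (simp add: xa TKJK Sdiff)
  ultimately show ?thesis by metis
qed

lemma approx_seq: "x \<in> dom (krein_S W) \<Longrightarrow> \<exists>fs. (\<forall>n. fs n \<in> dom W) \<and> (\<lambda>n. norm (the (krein_S W (fs n - x)))) \<longlonglongrightarrow> 0"
proof -
  assume x: "x \<in> dom (krein_S W)"
  have "\<forall>n. \<exists>y. y \<in> dom W \<and> norm (the (krein_S W (x - y))) < 1 / real (Suc n)"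
  proof
    fix n
    have "(0::real) < 1 / real (Suc n)" by simp
    then show "\<exists>y. y \<in> dom W \<and> norm (the (krein_S W (x - y))) < 1 / real (Suc n)"
      using density[OF x] by blast
  qed
  then obtain fs where fs: "\<And>n. fs n \<in> dom W" "\<And>n. norm (the (krein_S W (x - fs n))) < 1 / real (Suc n)"
    by metis
  obtain a where xa: "x = K a" using x dS by auto
  have fK: "fs n = K (inv K (fs n))" for n
    by (rule Kinv[symmetric], rule subsetD[OF domW_K fs(1)])
  have "norm (the (krein_S W (fs n - x))) = norm (the (krein_S W (x - fs n)))" for n
    by (subst (1 2) fK, simp only: xa Sdiff norm_minus_commute)
  then have "(\<lambda>n. norm (the (krein_S W (fs n - x)))) \<longlonglongrightarrow> 0"
    using fs(2) by (intro LIMSEQ_norm_0) simp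
  then show ?thesis using fs(1) by blast
qed

lemma S_conv:
  assumes "\<forall>n. fs n \<in> dom (krein_S W)" "f \<in> dom (krein_S W)"
    "(\<lambda>n. norm (the (krein_S W (fs n - f)))) \<longlonglongrightarrow> 0"
  shows "(\<lambda>n. inv K (fs n)) \<longlonglongrightarrow> inv K f"
proof -
  have fK: "fs n = K (inv K (fs n))" for n
    by (rule Kinv[symmetric]) (use assms(1) dS in blast)
  have f: "f = K (inv K f)"
    by (rule Kinv[symmetric]) (use assms(2) dS in blast)
  have "the (krein_S W (fs n - f)) = inv K (fs n) - inv K f" for n
    by (subst fK, subst f, rule Sdiff)
  then have "(\<lambda>n. norm (inv K (fs n) - inv K f)) \<longlonglongrightarrow> 0" using assms(3) by simp
  then show ?thesis by (simp add: tendsto_norm_zero_iff LIM_zero_iff)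
qed

lemma ext_form_eq:
  assumes f: "f \<in> dom (krein_S W)" and g: "g \<in> dom (krein_S W)"
    and lim: "\<And>fs gs. (\<forall>n. fs n \<in> dom W \<and> gs n \<in> dom W) \<Longrightarrow>
      (\<lambda>n. inv K (fs n)) \<longlonglongrightarrow> inv K f \<Longrightarrow> (\<lambda>n. inv K (gs n)) \<longlonglongrightarrow> inv K g \<Longrightarrow>
      (\<lambda>n. \<phi> (fs n) (gs n)) \<longlonglongrightarrow> c"
  shows "ext_form W \<phi> f g = c"
proof -
  let ?P = "\<lambda>c. \<forall>fs gs. (\<forall>n. fs n \<in> dom W \<and> gs n \<in> dom W) \<and>
      (\<lambda>n. norm (the (krein_S W (fs n - f)))) \<longlonglongrightarrow> 0 \<and>
      (\<lambda>n. norm (the (krein_S W (gs n - g)))) \<longlonglongrightarrow> 0 \<longrightarrow>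
      (\<lambda>n. \<phi> (fs n) (gs n)) \<longlonglongrightarrow> c"
  have dK: "\<And>y. y \<in> dom W \<Longrightarrow> y \<in> dom (krein_S W)" using domW_K dS by auto
  have Pc: "?P c"
  proof (intro allI impI)
    fix fs gs assume h: "(\<forall>n. fs n \<in> dom W \<and> gs n \<in> dom W) \<and>
      (\<lambda>n. norm (the (krein_S W (fs n - f)))) \<longlonglongrightarrow> 0 \<and>
      (\<lambda>n. norm (the (krein_S W (gs n - g)))) \<longlonglongrightarrow> 0"
    show "(\<lambda>n. \<phi> (fs n) (gs n)) \<longlonglongrightarrow> c"
      using h S_conv[OF _ f, of fs] S_conv[OF _ g, of gs] dK by (intro lim) auto
  qed
  obtain fs where fs: "\<forall>n. fs n \<in> dom W" "(\<lambda>n. norm (the (krein_S W (fs n - f)))) \<longlonglongrightarrow> 0"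
    using approx_seq[OF f] by blast
  obtain gs where gs: "\<forall>n. gs n \<in> dom W" "(\<lambda>n. norm (the (krein_S W (gs n - g)))) \<longlonglongrightarrow> 0"
    using approx_seq[OF g] by blast
  have uq: "c' = c" if "?P c'" for c'
  proof -
    have "(\<lambda>n. \<phi> (fs n) (gs n)) \<longlonglongrightarrow> c'" using that fs gs by blast
    moreover have "(\<lambda>n. \<phi> (fs n) (gs n)) \<longlonglongrightarrow> c" using Pc fs gs by blast
    ultimately show ?thesis by (rule LIMSEQ_unique)
  qed
  show ?thesis unfolding ext_form_def by (rule the_equality[where P="?P", OF Pc uq])
qed


lemma e1: "f \<in> dom W \<Longrightarrow> g \<in> dom W \<Longrightarrow> cinner f (the (op_abs W g)) = cinner (inv K f) (inv K g)"
proof -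
  assume f: "f \<in> dom W" and g: "g \<in> dom W"
  obtain a where fa: "f = K a" using f domW_K by auto
  obtain c where gc: "g = T c" using g rangeT by auto
  have "the (op_abs W g) = J c" by (simp add: absW gc TMJ pinv_the[OF injM])
  moreover have "inv K g = K (J c)" using injK by (simp add: gc TMJ KK[symmetric])
  ultimately show ?thesis using lK(3) injK by (simp add: fa hsym_def)
qed

lemma e2: "f \<in> dom W \<Longrightarrow> g \<in> dom W \<Longrightarrow> cinner f (the (W g)) = cinner (inv K f) (J (inv K g))"
proof -
  assume f: "f \<in> dom W" and g: "g \<in> dom W"
  obtain a where fa: "f = K a" using f domW_K by auto
  obtain c where gc: "g = T c" using g rangeT by auto
  have "the (W g) = c" by (simp add: gc WT)
  moreover have "J (inv K g) = K c" using injK by (simp add: gc TKJK JJ)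
  ultimately show ?thesis using lK(3) injK by (simp add: fa hsym_def)
qed

lemma Jip: "f \<in> dom (krein_S W) \<Longrightarrow> g \<in> dom (krein_S W) \<Longrightarrow> krein_Jip W f g = cinner (inv K f) (inv K g)"
  unfolding krein_Jip_def
proof (rule ext_form_eq)
  fix fs gs assume h: "\<forall>n. fs n \<in> dom W \<and> gs n \<in> dom W"
    "(\<lambda>n. inv K (fs n)) \<longlonglongrightarrow> inv K f" "(\<lambda>n. inv K (gs n)) \<longlonglongrightarrow> inv K g"
  have "(\<lambda>n. cinner (inv K (fs n)) (inv K (gs n))) \<longlonglongrightarrow> cinner (inv K f) (inv K g)"
    by (rule tendsto_cinner[OF h(2,3)])
  then show "(\<lambda>n. cinner (fs n) (the (op_abs W (gs n)))) \<longlonglongrightarrow> cinner (inv K f) (inv K g)"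
    using h(1) by (simp add: e1)
qed

lemma Kip: "f \<in> dom (krein_S W) \<Longrightarrow> g \<in> dom (krein_S W) \<Longrightarrow> krein_ip W f g = cinner (inv K f) (J (inv K g))"
  unfolding krein_ip_def
proof (rule ext_form_eq)
  fix fs gs assume h: "\<forall>n. fs n \<in> dom W \<and> gs n \<in> dom W"
    "(\<lambda>n. inv K (fs n)) \<longlonglongrightarrow> inv K f" "(\<lambda>n. inv K (gs n)) \<longlonglongrightarrow> inv K g"
  have "(\<lambda>n. cinner (inv K (fs n)) (J (inv K (gs n)))) \<longlonglongrightarrow> cinner (inv K f) (J (inv K g))"
    by (rule tendsto_cinner[OF h(2) J_tendsto[OF h(3)]])
  then show "(\<lambda>n. cinner (fs n) (the (W (gs n)))) \<longlonglongrightarrow> cinner (inv K f) (J (inv K g))"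
    using h(1) by (simp add: e2)
qed

lemma theS_inv: "x \<in> dom (krein_S W) \<Longrightarrow> the (krein_S W x) = inv K x"
  using dS theS Kinv by (metis)

end



context wsetup
begin

lemma part4: "h \<in> dom W \<Longrightarrow> norm (the (krein_S W h)) = krein_Jnorm W h"
proof -
  assume h: "h \<in> dom W"
  obtain c where hc: "h = T c" using h rangeT by auto
  have h1: "h = M (J c)" by (simp add: hc TMJ)
  have h2: "h = K (K (J c))" by (simp add: h1 KK)
  have "the (op_abs W h) = J c" by (simp add: absW h1 pinv_the[OF injM])
  then have "Re (cinner h (the (op_abs W h))) = Re (cinner (K (J c)) (K (J c)))"
    using lK(3) by (simp add: h2 hsym_def)
  also have "\<dots> = (norm (K (J c)))\<^sup>2" by (simp add: cinner_self_Re)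
  finally have "krein_Jnorm W h = norm (K (J c))" by (simp add: krein_Jnorm_def)
  moreover have "the (krein_S W h) = K (J c)" by (simp add: h2 theS)
  ultimately show ?thesis by simp
qed

lemma part5: "bij_betw (\<lambda>x. the (krein_S W x)) (dom (krein_S W)) UNIV"
proof -
  have "inj_on (\<lambda>x. the (krein_S W x)) (range K)"
    by (rule inj_onI) (metis theS image_iff)
  moreover have "(\<lambda>x. the (krein_S W x)) ` range K = UNIV"
  proof -
    have "a \<in> (\<lambda>x. the (krein_S W x)) ` range K" for a
      by (rule image_eqI[of _ _ "K a"]) (simp_all add: theS)
    then show ?thesis by auto
  qed
  ultimately show ?thesis by (simp add: bij_betw_def dS)
qed

lemma part6: "f \<in> dom (krein_S W) \<Longrightarrow> g \<in> dom (krein_S W) \<Longrightarrow>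
  cinner (the (krein_S W f)) (the (krein_S W g)) = krein_Jip W f g"
  by (simp add: theS_inv Jip)

lemma part7: "hilbert_frame ks A B \<longleftrightarrow>
  krein_frame W (\<lambda>n. inv_into (dom (krein_S W)) (\<lambda>x. the (krein_S W x)) (ks n)) A B"
proof -
  have iv: "inv_into (dom (krein_S W)) (\<lambda>x. the (krein_S W x)) y = K y" for y
    by (rule inv_into_f_eq[OF bij_betw_imp_inj_on[OF part5]]) (simp_all add: dS theS)
  let ?Q = "\<lambda>f. summable (\<lambda>n. (cmod (cinner (ks n) f))\<^sup>2) \<and>
          A * (norm f)\<^sup>2 \<le> (\<Sum>n. (cmod (cinner (ks n) f))\<^sup>2) \<and>
          (\<Sum>n. (cmod (cinner (ks n) f))\<^sup>2) \<le> B * (norm f)\<^sup>2"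
  have kr: "krein_frame W (\<lambda>n. K (ks n)) A B \<longleftrightarrow> 0 < A \<and> A \<le> B \<and> (\<forall>k\<in>range K. ?Q (J (inv K k)))"
  proof -
    have "krein_ip W (K (ks n)) k = cinner (ks n) (J (inv K k))" if "k \<in> range K" for n k
      using that injK by (simp add: Kip dS)
    moreover have "krein_Jnorm_ext W k = norm (J (inv K k))" if "k \<in> range K" for k
      using that by (simp add: krein_Jnorm_ext_def Jip dS J_norm cinner_self_Re)
    ultimately show ?thesis unfolding krein_frame_def dS by auto
  qed
  have eq: "(\<forall>f. ?Q f) \<longleftrightarrow> (\<forall>k\<in>range K. ?Q (J (inv K k)))"
  proof
    assume "\<forall>f. ?Q f" then show "\<forall>k\<in>range K. ?Q (J (inv K k))" by blast
  next
    assume a: "\<forall>k\<in>range K. ?Q (J (inv K k))"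
    show "\<forall>f. ?Q f"
    proof
      fix f
      have "?Q (J (inv K (K (J f))))" using a by blast
      then show "?Q f" using injK by (simp add: JJ)
    qed
  qed
  show ?thesis unfolding iv kr hilbert_frame_def using eq by blast
qed

lemma main:
    "(\<forall>xs. (\<forall>n. xs n \<in> dom (krein_S W)) \<and>
        (\<forall>e>0. \<exists>N. \<forall>m\<ge>N. \<forall>n\<ge>N. norm (the (krein_S W (xs m - xs n))) < e) \<longrightarrow>
        (\<exists>x\<in>dom (krein_S W). (\<lambda>n. norm (the (krein_S W (xs n - x)))) \<longlonglongrightarrow> 0))
     \<and> dom W \<subseteq> dom (krein_S W)
     \<and> (\<forall>x\<in>dom (krein_S W). \<forall>e>0. \<exists>y\<in>dom W. norm (the (krein_S W (x - y))) < e)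
     \<and> (\<forall>h\<in>dom W. norm (the (krein_S W h)) = krein_Jnorm W h)
     \<and> bij_betw (\<lambda>x. the (krein_S W x)) (dom (krein_S W)) UNIV
     \<and> (\<forall>f\<in>dom (krein_S W). \<forall>g\<in>dom (krein_S W).
          cinner (the (krein_S W f)) (the (krein_S W g)) = krein_Jip W f g)
     \<and> (\<forall>(ks::nat \<Rightarrow> 'a) A B. hilbert_frame ks A B \<longleftrightarrow>
          krein_frame W (\<lambda>n. inv_into (dom (krein_S W)) (\<lambda>x. the (krein_S W x)) (ks n)) A B)"
  using part1 domW_K dS density part4 part5 part6 part7 by auto

end


theorem theorem4p3:
  fixes W :: "'a::chilbert op"
  assumes separable: "\<exists>D::'a set. countable D \<and> closure D = UNIV"
    and sa: "self_adjoint_op W"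
    and zero_res: "0 \<notin> op_spectrum W"
  shows
    "(\<forall>xs. (\<forall>n. xs n \<in> dom (krein_S W)) \<and>
        (\<forall>e>0. \<exists>N. \<forall>m\<ge>N. \<forall>n\<ge>N. norm (the (krein_S W (xs m - xs n))) < e) \<longrightarrow>
        (\<exists>x\<in>dom (krein_S W). (\<lambda>n. norm (the (krein_S W (xs n - x)))) \<longlonglongrightarrow> 0))
     \<and> dom W \<subseteq> dom (krein_S W)
     \<and> (\<forall>x\<in>dom (krein_S W). \<forall>e>0. \<exists>y\<in>dom W. norm (the (krein_S W (x - y))) < e)
     \<and> (\<forall>h\<in>dom W. norm (the (krein_S W h)) = krein_Jnorm W h)
     \<and> bij_betw (\<lambda>x. the (krein_S W x)) (dom (krein_S W)) UNIV
     \<and> (\<forall>f\<in>dom (krein_S W). \<forall>g\<in>dom (krein_S W).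
          cinner (the (krein_S W f)) (the (krein_S W g)) = krein_Jip W f g)
     \<and> (\<forall>(ks::nat \<Rightarrow> 'a) A B. hilbert_frame ks A B \<longleftrightarrow>
          krein_frame W (\<lambda>n. inv_into (dom (krein_S W)) (\<lambda>x. the (krein_S W x)) (ks n)) A B)"
  proof -
  interpret wsetup W using sa zero_res by unfold_locales
  show ?thesis by (rule main)
qed

end
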